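(* Let $N$ be a positive integer and let $S\subseteq[0,1]$ be measurable. For $n\in\{1,\dots,N\}$ let $$A_n=\Big\{t\in[0,\tfrac1N]:\ t+\tfrac jN\in S\text{ for exactly } n \text{ values of } j\in\{0,\dots,N-1\}\Big\},\qquad A_{\ge n}=\bigcup_{k=n}^N A_k .$$ Suppose there exist sets $\Lambda_1,\dots,\Lambda_N\subseteq N\mathbb{Z}$ such that for each $n$ the system $E(\Lambda_n)$ is a Riesz basis of $L^2(A_{\ge n})$. Then, with $\Lambda=\bigcup_{j=1}^N(\Lambda_j+j)$, the system $E(\Lambda)$ is a Riesz basis of $L^2(S)$.
   Context: For real $\lambda$, $e_\lambda(t)=e^{2\pi i\lambda t}$, and $E(\Lambda)=\{e_\lambda\}_{\lambda\in\Lambda}$. A Riesz basis of a Hilbert space $H$ is the image of an orthonormal basis under a bounded invertible operator. Equivalently, it is a complete system $\{f_n\}$ with $c\sum|a_n|^2\le\|\sum a_nf_n\|^2\le C\sum|a_n|^2$ for all $\{a_n\}\in\ell^2$, for some constants $0<c\le C$. If $A_{\ge n}$ has measure zero, $L^2(A_{\ge n})=\{0\}$ and the empty system counts as a Riesz basis of it. *)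

theory Defs
  imports "HOL-Analysis.Analysis"
begin

definition expo :: "real \<Rightarrow> real \<Rightarrow> complex" where
  "expo lam t = exp (2 * of_real pi * \<i> * of_real (lam * t))"

definition in_L2 :: "real set \<Rightarrow> (real \<Rightarrow> complex) \<Rightarrow> bool" where
  "in_L2 A f \<longleftrightarrow> (\<lambda>t. indicator A t *\<^sub>R f t) \<in> borel_measurable lebesgue
      \<and> integrable lebesgue (\<lambda>t. indicator A t * (cmod (f t))\<^sup>2)"

definition L2_norm_sq :: "real set \<Rightarrow> (real \<Rightarrow> complex) \<Rightarrow> real" where
  "L2_norm_sq A f = (LINT t|lebesgue. indicator A t * (cmod (f t))\<^sup>2)"

text \<open>E(Lambda) is a Riesz basis of L^2(A): it is complete (finite linear combinations
  are dense in L^2(A)) and satisfies the two-sided Riesz inequality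
  c * sum |a|^2 <= ||sum a_lam e_lam||^2 <= C * sum |a|^2 (stated for finitely supported
  coefficient sequences, which is equivalent to the ell^2 version by density).\<close>
definition riesz_basis_exp :: "real set \<Rightarrow> real set \<Rightarrow> bool" where
  "riesz_basis_exp A Lam \<longleftrightarrow>
     (\<forall>f. in_L2 A f \<longrightarrow> (\<forall>\<epsilon>>0. \<exists>F a. finite F \<and> F \<subseteq> Lam \<and>
          L2_norm_sq A (\<lambda>t. f t - (\<Sum>lam\<in>F. a lam * expo lam t)) < \<epsilon>))
   \<and> (\<exists>c C. 0 < c \<and> c \<le> C \<and>
        (\<forall>F a. finite F \<longrightarrow> F \<subseteq> Lam \<longrightarrow>
           c * (\<Sum>lam\<in>F. (cmod (a lam))\<^sup>2) \<le> L2_norm_sq A (\<lambda>t. \<Sum>lam\<in>F. a lam * expo lam t)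
         \<and> L2_norm_sq A (\<lambda>t. \<Sum>lam\<in>F. a lam * expo lam t) \<le> C * (\<Sum>lam\<in>F. (cmod (a lam))\<^sup>2)))"

definition A_set :: "nat \<Rightarrow> real set \<Rightarrow> nat \<Rightarrow> real set" where
  "A_set N S n = {t \<in> {0..1 / real N}. card {j \<in> {0..<N}. t + real j / real N \<in> S} = n}"

definition A_ge :: "nat \<Rightarrow> real set \<Rightarrow> nat \<Rightarrow> real set" where
  "A_ge N S n = (\<Union>k\<in>{n..N}. A_set N S k)"

end

theory Submission
  imports Defs "HOL-Computational_Algebra.Polynomial"
begin

definition lag :: "(nat \<Rightarrow> complex) \<Rightarrow> nat set \<Rightarrow> nat \<Rightarrow> complex poly" where
  "lag x J m = smult (1 / (\<Prod>m'\<in>J-{m}. (x m - x m'))) (\<Prod>m'\<in>J-{m}. [:- x m', 1:])"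

lemma poly_lag:
  assumes "finite J" "inj_on x J" "m \<in> J" "m' \<in> J"
  shows "poly (lag x J m) (x m') = (if m' = m then 1 else 0)"
proof (cases "m' = m")
  case True
  have "(\<Prod>m''\<in>J-{m}. (x m - x m'')) \<noteq> 0"
    using assms by (auto simp: inj_on_def)
  then show ?thesis using True by (simp add: lag_def poly_prod)
next
  case False
  have "(\<Prod>m''\<in>J-{m}. poly [:- x m'', 1:] (x m')) = 0"
    using assms False by (intro prod_zero) (auto intro!: bexI[of _ m'])
  then show ?thesis using False by (simp add: lag_def poly_prod)
qed

lemma degree_lag:
  assumes "finite J" "m \<in> J"
  shows "degree (lag x J m) < card J"
proof -
  have "degree (\<Prod>m'\<in>J-{m}. [:- x m', 1:]) \<le> (\<Sum>m'\<in>J-{m}. degree [:- x m', 1:])"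
    using degree_prod_sum_le[of "J-{m}" "\<lambda>m'. [:- x m', 1:]"] assms by (simp add: o_def)
  also have "\<dots> = card (J - {m})" by simp
  also have "\<dots> < card J" using assms by (metis card_Diff1_less)
  finally show ?thesis unfolding lag_def
    by (meson degree_smult_le le_less_trans)
qed

lemma lag_interp:
  assumes "finite J" "inj_on x J" "degree p < card J"
  shows "p = (\<Sum>m\<in>J. smult (poly p (x m)) (lag x J m))"
proof (rule poly_eqI_degree[where A="x ` J"])
  fix z assume "z \<in> x ` J"
  then obtain m' where m': "m' \<in> J" "z = x m'" by auto
  have "poly (\<Sum>m\<in>J. smult (poly p (x m)) (lag x J m)) z
      = (\<Sum>m\<in>J. poly p (x m) * poly (lag x J m) (x m'))"
    by (simp add: poly_sum m')
  also have "\<dots> = (\<Sum>m\<in>J. if m = m' then poly p (x m) else 0)"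
    using assms m' by (intro sum.cong) (auto simp: poly_lag)
  also have "\<dots> = poly p z" using m' assms by simp
  finally show "poly p z = poly (\<Sum>m\<in>J. smult (poly p (x m)) (lag x J m)) z" by simp
next
  show "degree p < card (x ` J)" using assms by (simp add: card_image)
  have "degree (\<Sum>m\<in>J. smult (poly p (x m)) (lag x J m)) \<le> card J - 1"
  proof (rule degree_sum_le)
    fix m assume "m \<in> J"
    then show "degree (smult (poly p (x m)) (lag x J m)) \<le> card J - 1"
      using degree_lag[OF assms(1), of m x] degree_smult_le
      by (metis Suc_pred' bot_nat_0.not_eq_extremum degree_smult_eq less_Suc_eq_le less_nat_zero_code)
  qed (use assms in auto)
  then show "degree (\<Sum>m\<in>J. smult (poly p (x m)) (lag x J m)) < card (x ` J)"
    using assms by (simp add: card_image)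
qed

definition LL :: "(nat \<Rightarrow> complex) \<Rightarrow> nat set \<Rightarrow> nat \<Rightarrow> nat \<Rightarrow> complex" where
  "LL x J j m = coeff (lag x J m) (j - 1) / x m"

lemma poly_sum_lt:
  fixes p :: "complex poly"
  assumes "degree p < k"
  shows "poly p z = (\<Sum>i<k. coeff p i * z ^ i)"
proof -
  have "poly p z = (\<Sum>i\<le>degree p. coeff p i * z ^ i)" by (rule poly_altdef)
  also have "\<dots> = (\<Sum>i<k. coeff p i * z ^ i)"
    using assms by (intro sum.mono_neutral_left) (auto simp: coeff_eq_0)
  finally show ?thesis .
qed

lemma LL_right:
  assumes "finite J" "inj_on x J" "m \<in> J" "m' \<in> J" "\<And>m. m \<in> J \<Longrightarrow> x m \<noteq> 0"
  shows "(\<Sum>j\<in>{1..card J}. x m' ^ j * LL x J j m) = (if m = m' then 1 else 0)"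
proof -
  have "(\<Sum>j\<in>{1..card J}. x m' ^ j * LL x J j m) = (\<Sum>i<card J. x m' ^ Suc i * LL x J (Suc i) m)"
    by (rule sum.reindex_bij_witness[where i=Suc and j="\<lambda>j. j - 1"]) auto
  also have "\<dots> = x m' / x m * (\<Sum>i<card J. coeff (lag x J m) i * x m' ^ i)"
    by (simp add: LL_def sum_distrib_left mult_ac)
  also have "\<dots> = x m' / x m * poly (lag x J m) (x m')"
    using poly_sum_lt[OF degree_lag[OF assms(1,3)], of x "x m'"] by simp
  also have "\<dots> = (if m = m' then 1 else 0)"
    using assms by (auto simp: poly_lag)
  finally show ?thesis .
qed

lemma LL_left:
  assumes "finite J" "inj_on x J" "j \<in> {1..card J}" "j' \<in> {1..card J}" "\<And>m. m \<in> J \<Longrightarrow> x m \<noteq> 0"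
  shows "(\<Sum>m\<in>J. LL x J j m * x m ^ j') = (if j = j' then 1 else 0)"
proof -
  define p :: "complex poly" where "p = monom 1 (j' - 1)"
  have dp: "degree p < card J" using assms(4) unfolding p_def degree_monom_eq[OF one_neq_zero] by auto
  have "(\<Sum>m\<in>J. LL x J j m * x m ^ j') = (\<Sum>m\<in>J. coeff (smult (poly p (x m)) (lag x J m)) (j - 1))"
  proof (intro sum.cong refl)
    fix m assume m: "m \<in> J"
    have "x m ^ j' = x m * x m ^ (j' - 1)" using assms(4)
      by (metis One_nat_def Suc_pred atLeastAtMost_iff less_eq_Suc_le power_Suc)
    then show "LL x J j m * x m ^ j' = coeff (smult (poly p (x m)) (lag x J m)) (j - 1)"
      using assms(5)[OF m] by (simp add: LL_def p_def poly_monom)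
  qed
  also have "\<dots> = coeff (\<Sum>m\<in>J. smult (poly p (x m)) (lag x J m)) (j - 1)"
    by (simp add: coeff_sum)
  also have "\<dots> = coeff p (j - 1)" using lag_interp[OF assms(1,2) dp] by simp
  also have "\<dots> = (if j = j' then 1 else 0)" using assms by (auto simp: p_def coeff_monom)
  finally show ?thesis .
qed


lemma expo_cis: "expo l t = cis (2 * pi * (l * t))"
  by (simp add: expo_def cis_conv_exp mult_ac)

lemma norm_expo[simp]: "cmod (expo l t) = 1"
  by (simp add: expo_cis)

lemma expo_add_freq: "expo (a + b) t = expo a t * expo b t"
  by (simp add: expo_def distrib_right distrib_left exp_add[symmetric] mult_ac)

lemma expo_add_time: "expo a (s + t) = expo a s * expo a t"
  by (simp add: expo_def distrib_right distrib_left exp_add[symmetric] mult_ac)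

lemma expo_zero_freq[simp]: "expo 0 t = 1"
  by (simp add: expo_def)

lemma expo_cnj: "cnj (expo a t) = expo (- a) t"
  by (simp add: expo_cis cis_cnj)

lemma expo_diff_freq: "expo a t * cnj (expo b t) = expo (a - b) t"
  by (simp add: expo_cnj expo_add_freq[symmetric])

lemma expo_int: assumes "l * t \<in> \<int>" shows "expo l t = 1"
proof -
  from assms obtain n where n: "l * t = of_int n" by (auto elim: Ints_cases)
  have "expo l t = cis (2 * pi * of_int n)" by (simp add: expo_cis n)
  also have "\<dots> = 1" by (simp add: complex_eq_iff)
  finally show ?thesis .
qed

lemma expo_pow: "expo l t ^ n = expo (real n * l) t"
  by (simp add: expo_def exp_of_nat_mult[symmetric] mult_ac)

lemma continuous_expo[continuous_intros]: "continuous_on A (expo l)"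
  unfolding expo_def by (intro continuous_intros)

lemma expo_deriv:
  assumes "d \<noteq> 0"
  shows "((\<lambda>t. expo d t / (2 * of_real pi * \<i> * of_real d)) has_vector_derivative expo d t) (at t within A)"
proof -
  let ?c = "2 * of_real pi * \<i> * of_real d :: complex"
  have c: "?c \<noteq> 0" using assms by simp
  have "((\<lambda>z. exp (?c * z) / ?c) has_field_derivative exp (?c * of_real t)) (at (of_real t))"
    using c by (auto intro!: derivative_eq_intros)
  from has_vector_derivative_real_field[OF this]
  have "((\<lambda>x. exp (?c * of_real x) / ?c) has_vector_derivative exp (?c * of_real t)) (at t within A)" .
  moreover have "\<And>x. exp (?c * of_real x) = expo d x" by (simp add: expo_def mult_ac)
  ultimately show ?thesis by simp
qed

lemma integral_expo_interval:
  assumes "P > 0" "d * P \<in> \<int>"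
  shows "integral\<^sup>L lborel (\<lambda>t. indicator {0..P} t *\<^sub>R expo d t) = (if d = 0 then of_real P else 0)"
proof (cases "d = 0")
  case True
  have "integral\<^sup>L lborel (\<lambda>t. indicator {0..P} t *\<^sub>R expo d t) = of_real (integral\<^sup>L lborel (\<lambda>t. indicator {0..P} t :: real))"
    using True by (simp add: scaleR_conv_of_real)
  also have "\<dots> = of_real P" using assms by simp
  finally show ?thesis using True by simp
next
  case False
  have "integral\<^sup>L lborel (\<lambda>t. indicator {0..P} t *\<^sub>R expo d t)
      = expo d P / (2 * of_real pi * \<i> * of_real d) - expo d 0 / (2 * of_real pi * \<i> * of_real d)"
    using assms False by (intro integral_FTC_atLeastAtMost expo_deriv continuous_expo) auto
  also have "\<dots> = 0" using assms by (simp add: expo_int mult.commute)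
  finally show ?thesis using False by simp
qed

lemma integrable_expo_interval:
  "integrable lborel (\<lambda>t. indicator {0..P} t *\<^sub>R expo d t)"
  using borel_integrable_atLeastAtMost'[OF continuous_expo] unfolding set_integrable_def .

lemma parseval_lborel:
  fixes a :: "real \<Rightarrow> complex"
  assumes "P > 0" "finite F" and sep: "\<And>l m. l \<in> F \<Longrightarrow> m \<in> F \<Longrightarrow> (l - m) * P \<in> \<int>"
  shows "(LINT t|lborel. indicator {0..P} t * (cmod (\<Sum>l\<in>F. a l * expo l t))\<^sup>2) = P * (\<Sum>l\<in>F. (cmod (a l))\<^sup>2)"
proof -
  have eq: "complex_of_real (indicator {0..P} t * (cmod (\<Sum>l\<in>F. a l * expo l t))\<^sup>2)
      = (\<Sum>l\<in>F. \<Sum>m\<in>F. (a l * cnj (a m)) * (indicator {0..P} t *\<^sub>R expo (l - m) t))" for t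
  proof -
    have "complex_of_real ((cmod (\<Sum>l\<in>F. a l * expo l t))\<^sup>2)
        = (\<Sum>l\<in>F. a l * expo l t) * cnj (\<Sum>l\<in>F. a l * expo l t)"
      by (rule complex_norm_square)
    also have "\<dots> = (\<Sum>l\<in>F. \<Sum>m\<in>F. (a l * cnj (a m)) * (expo l t * cnj (expo m t)))"
      by (simp add: sum_product mult_ac)
    finally show ?thesis
      by (simp add: expo_diff_freq indicator_def sum_distrib_left mult_ac)
  qed
  have "complex_of_real (LINT t|lborel. indicator {0..P} t * (cmod (\<Sum>l\<in>F. a l * expo l t))\<^sup>2)
      = (LINT t|lborel. complex_of_real (indicator {0..P} t * (cmod (\<Sum>l\<in>F. a l * expo l t))\<^sup>2))"
    by (rule integral_complex_of_real[symmetric])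
  also have "\<dots> = (LINT t|lborel. (\<Sum>l\<in>F. \<Sum>m\<in>F. (a l * cnj (a m)) * (indicator {0..P} t *\<^sub>R expo (l - m) t)))"
    by (simp only: eq)
  also have "\<dots> = (\<Sum>l\<in>F. \<Sum>m\<in>F. (a l * cnj (a m)) * (LINT t|lborel. indicator {0..P} t *\<^sub>R expo (l - m) t))"
  proof -
    have int: "\<And>l m. integrable lborel (\<lambda>t. (a l * cnj (a m)) * (indicator {0..P} t *\<^sub>R expo (l - m) t))"
      by (intro integrable_mult_right integrable_expo_interval)
    let ?X = "\<lambda>l m t. (a l * cnj (a m)) * (indicator {0..P} t *\<^sub>R expo (l - m) t)"
    have "(LINT t|lborel. (\<Sum>l\<in>F. \<Sum>m\<in>F. ?X l m t)) = (\<Sum>l\<in>F. (LINT t|lborel. (\<Sum>m\<in>F. ?X l m t)))"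
      by (rule Bochner_Integration.integral_sum[where f="\<lambda>l t. \<Sum>m\<in>F. ?X l m t"]) (intro Bochner_Integration.integrable_sum int)
    also have "\<dots> = (\<Sum>l\<in>F. \<Sum>m\<in>F. (LINT t|lborel. (?X l m t)))"
      by (intro sum.cong refl Bochner_Integration.integral_sum[where f="\<lambda>m t. ?X l m t" for l] int)
    also have "\<dots> = (\<Sum>l\<in>F. \<Sum>m\<in>F. (a l * cnj (a m)) * (LINT t|lborel. indicator {0..P} t *\<^sub>R expo (l - m) t))"
      by (intro sum.cong refl integral_mult_right_zero)
    finally show ?thesis .
  qed
  also have "\<dots> = (\<Sum>l\<in>F. \<Sum>m\<in>F. (a l * cnj (a m)) * (if l = m then of_real P else 0))"
    using assms by (intro sum.cong refl) (simp add: integral_expo_interval left_diff_distrib)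
  also have "\<dots> = (\<Sum>l\<in>F. a l * cnj (a l) * of_real P)"
    using assms(2) by (simp add: if_distrib cong: if_cong)
  also have "\<dots> = complex_of_real (P * (\<Sum>l\<in>F. (cmod (a l))\<^sup>2))"
    by (simp add: complex_norm_square sum_distrib_left mult_ac del: of_real_power)
  finally show ?thesis by (simp only: of_real_eq_iff)
qed


lemma meas_transl:
  fixes f :: "real \<Rightarrow> 'b::euclidean_space"
  assumes "f \<in> borel_measurable lebesgue"
  shows "(\<lambda>t. f (t + c)) \<in> borel_measurable lebesgue"
  using borel_measurable_affine[OF assms, of 1 c] by (simp add: add.commute)

lemma meas_cont:
  fixes f :: "real \<Rightarrow> 'b::euclidean_space"
  assumes "continuous_on UNIV f"
  shows "f \<in> borel_measurable lebesgue"
  using assms by (intro measurable_completion) (simp add: borel_measurable_continuous_onI)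

lemma meas_expo[measurable]: "expo l \<in> borel_measurable lebesgue"
  by (intro meas_cont continuous_expo)

lemma meas_expo'[measurable]: "(\<lambda>t. expo l t) \<in> borel_measurable lebesgue"
  by (intro meas_cont continuous_expo)

lemma meas_id[measurable]: "(\<lambda>x::real. x) \<in> borel_measurable lebesgue"
  by (intro meas_cont continuous_on_id)

lemma integrable_bdd:
  fixes h :: "real \<Rightarrow> real"
  assumes h: "h \<in> borel_measurable lebesgue" and A: "A \<in> sets lebesgue" "A \<subseteq> {a..b}"
    and B: "\<And>x. x \<in> A \<Longrightarrow> \<bar>h x\<bar> \<le> B"
  shows "integrable lebesgue (\<lambda>x. indicator A x * h x)"
proof (rule integrableI_bounded_set[where A=A and B=B])
  have "emeasure lebesgue A \<le> emeasure lebesgue {a..b}"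
    using A by (intro emeasure_mono) auto
  also have "\<dots> < \<infinity>" using emeasure_lborel_cbox_finite[of a b] by simp
  finally show "emeasure lebesgue A < \<infinity>" .
qed (use assms in \<open>auto simp: indicator_def\<close>)

lemma sum_ind_ge1:
  fixes x :: real
  assumes "N > 0" "x \<in> {0..1}"
  shows "1 \<le> (\<Sum>m<N. indicator {real m / real N .. (real m + 1) / real N} x :: real)"
proof -
  define m where "m = (if x = 1 then N - 1 else nat \<lfloor>x * N\<rfloor>)"
  have mN: "m < N"
  proof (cases "x = 1")
    case False
    then have "x * N < N" using assms by (simp add: mult_less_cancel_right2)
    then have "\<lfloor>x * N\<rfloor> < int N" by linarith
    then show ?thesis using False assms by (simp add: m_def)
  qed (use assms in \<open>simp add: m_def\<close>)
  have "x \<in> {real m / real N .. (real m + 1) / real N}"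
  proof (cases "x = 1")
    case True
    then show ?thesis using assms by (simp add: m_def of_nat_diff field_simps)
  next
    case False
    have x0: "0 \<le> x * N" using assms by simp
    have "real m = of_int \<lfloor>x * N\<rfloor>" using False x0 by (simp add: m_def)
    then have "real m \<le> x * N" "x * N \<le> real m + 1" by linarith+
    then show ?thesis using assms by (simp add: field_simps)
  qed
  then have "1 = indicator {real m / real N .. (real m + 1) / real N} x" by simp
  also have "\<dots> \<le> (\<Sum>m<N. indicator {real m / real N .. (real m + 1) / real N} x :: real)"
    using mN by (intro member_le_sum) auto
  finally show ?thesis .
qed

lemma sum_ind_leN:
  fixes x :: real
  shows "(\<Sum>m<N. indicator {real m / real N .. (real m + 1) / real N} x :: real) \<le> N"
proof -
  have "(\<Sum>m<N. indicator {real m / real N .. (real m + 1) / real N} x :: real) \<le> (\<Sum>m<N. 1)"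
    by (intro sum_mono) (simp add: indicator_def)
  then show ?thesis by simp
qed

lemma fib_nn:
  fixes h :: "real \<Rightarrow> real" and N :: nat
  assumes N: "N > 0" and S[measurable]: "S \<in> sets lebesgue" and h[measurable]: "h \<in> borel_measurable lebesgue" and h0: "\<And>x. 0 \<le> h x"
  shows "(\<integral>\<^sup>+t. ennreal (indicator {0..1/N} t * (\<Sum>m<N. indicator S (t + m/N) * h (t + m/N))) \<partial>lebesgue)
       = (\<integral>\<^sup>+x. ennreal ((\<Sum>m<N. indicator {real m / real N .. (real m + 1) / real N} x) * (indicator S x * h x)) \<partial>lebesgue)"
proof -
  define \<phi> where "\<phi> m x = indicator {real m / real N .. (real m + 1) / real N} x * (indicator S x * h x)" for m x
  have \<phi>m[measurable]: "\<phi> m \<in> borel_measurable lebesgue" for m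
    unfolding \<phi>_def using S h by measurable
  have \<phi>0: "0 \<le> \<phi> m x" for m x using h0 by (simp add: \<phi>_def)
  have tr: "indicator {0..1/N} t * (indicator S (t + m/N) * h (t + m/N)) = \<phi> m (m/N + t)" for m t
  proof -
    have "(real m / real N \<le> m/N + t \<and> m/N + t \<le> (real m + 1) / real N) \<longleftrightarrow> (0 \<le> t \<and> t \<le> 1/N)"
      using N by (auto simp: field_simps zero_le_mult_iff)
    then show ?thesis by (simp add: \<phi>_def indicator_def add.commute)
  qed
  have "(\<integral>\<^sup>+t. ennreal (indicator {0..1/N} t * (\<Sum>m<N. indicator S (t + m/N) * h (t + m/N))) \<partial>lebesgue)
      = (\<integral>\<^sup>+t. (\<Sum>m<N. ennreal (\<phi> m (m/N + t))) \<partial>lebesgue)"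
  proof (intro nn_integral_cong)
    fix t
    have "indicator {0..1/N} t * (\<Sum>m<N. indicator S (t + m/N) * h (t + m/N)) = (\<Sum>m<N. \<phi> m (m/N + t))"
      by (simp only: sum_distrib_left tr)
    then show "ennreal (indicator {0..1/N} t * (\<Sum>m<N. indicator S (t + m/N) * h (t + m/N))) = (\<Sum>m<N. ennreal (\<phi> m (m/N + t)))"
      by (simp add: \<phi>0)
  qed
  also have "\<dots> = (\<Sum>m<N. \<integral>\<^sup>+t. ennreal (\<phi> m (m/N + t)) \<partial>lebesgue)"
  proof (rule nn_integral_sum)
    fix m
    have "(\<lambda>t. \<phi> m (t + m/N)) \<in> borel_measurable lebesgue" by (rule meas_transl) measurable
    then show "(\<lambda>t. ennreal (\<phi> m (m/N + t))) \<in> borel_measurable lebesgue" by (simp add: add.commute)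
  qed
  also have "\<dots> = (\<Sum>m<N. \<integral>\<^sup>+x. ennreal (\<phi> m x) \<partial>lebesgue)"
  proof (intro sum.cong refl)
    fix m
    show "(\<integral>\<^sup>+t. ennreal (\<phi> m (m/N + t)) \<partial>lebesgue) = (\<integral>\<^sup>+x. ennreal (\<phi> m x) \<partial>lebesgue)"
      using nn_integral_real_affine_lebesgue[of "\<lambda>x. ennreal (\<phi> m x)" 1 "m/N"] by simp
  qed
  also have "\<dots> = (\<integral>\<^sup>+x. (\<Sum>m<N. ennreal (\<phi> m x)) \<partial>lebesgue)"
    by (rule nn_integral_sum[symmetric]) simp
  also have "\<dots> = (\<integral>\<^sup>+x. ennreal ((\<Sum>m<N. indicator {real m / real N .. (real m + 1) / real N} x) * (indicator S x * h x)) \<partial>lebesgue)"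
  proof (intro nn_integral_cong)
    fix x
    show "(\<Sum>m<N. ennreal (\<phi> m x)) = ennreal ((\<Sum>m<N. indicator {real m / real N .. (real m + 1) / real N} x) * (indicator S x * h x))"
      by (subst sum_ennreal) (auto simp only: \<phi>0[unfolded \<phi>_def] \<phi>_def sum_distrib_right)
  qed
  finally show ?thesis .
qed

lemma fib_le:
  fixes h :: "real \<Rightarrow> real" and N :: nat
  assumes N: "N > 0" and S: "S \<in> sets lebesgue" "S \<subseteq> {0..1}" and h: "h \<in> borel_measurable lebesgue" and h0: "\<And>x. 0 \<le> h x"
  shows "(\<integral>\<^sup>+x. ennreal (indicator S x * h x) \<partial>lebesgue) \<le>
     (\<integral>\<^sup>+t. ennreal (indicator {0..1/N} t * (\<Sum>m<N. indicator S (t + m/N) * h (t + m/N))) \<partial>lebesgue)"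
  unfolding fib_nn[OF N S(1) h h0]
proof (intro nn_integral_mono ennreal_leI)
  fix x
  show "indicator S x * h x \<le> (\<Sum>m<N. indicator {real m / real N .. (real m + 1) / real N} x) * (indicator S x * h x)"
  proof (cases "x \<in> S")
    case True
    then have "1 \<le> (\<Sum>m<N. indicator {real m / real N .. (real m + 1) / real N} x :: real)"
      using S N by (intro sum_ind_ge1) auto
    then show ?thesis using h0[of x] True by (simp add: mult_le_cancel_right1)
  qed simp
qed

lemma fib_ge:
  fixes h :: "real \<Rightarrow> real" and N :: nat
  assumes N: "N > 0" and S[measurable]: "S \<in> sets lebesgue" and h[measurable]: "h \<in> borel_measurable lebesgue" and h0: "\<And>x. 0 \<le> h x"
  shows "(\<integral>\<^sup>+t. ennreal (indicator {0..1/N} t * (\<Sum>m<N. indicator S (t + m/N) * h (t + m/N))) \<partial>lebesgue)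
    \<le> N * (\<integral>\<^sup>+x. ennreal (indicator S x * h x) \<partial>lebesgue)"
  unfolding fib_nn[OF N S(1) h h0]
proof -
  have "(\<integral>\<^sup>+x. ennreal ((\<Sum>m<N. indicator {real m / real N .. (real m + 1) / real N} x) * (indicator S x * h x)) \<partial>lebesgue)
     \<le> (\<integral>\<^sup>+x. ennreal N * ennreal (indicator S x * h x) \<partial>lebesgue)"
  proof (intro nn_integral_mono)
    fix x
    have "(\<Sum>m<N. indicator {real m / real N .. (real m + 1) / real N} x) * (indicator S x * h x) \<le> N * (indicator S x * h x)"
      using sum_ind_leN[of N x] h0[of x] by (intro mult_right_mono) auto
    then show "ennreal ((\<Sum>m<N. indicator {real m / real N .. (real m + 1) / real N} x) * (indicator S x * h x)) \<le> ennreal N * ennreal (indicator S x * h x)"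
      using h0[of x] by (simp add: ennreal_mult[symmetric] ennreal_leI)
  qed
  also have "\<dots> = ennreal N * (\<integral>\<^sup>+x. ennreal (indicator S x * h x) \<partial>lebesgue)"
    by (intro nn_integral_cmult) measurable
  finally show "(\<integral>\<^sup>+x. ennreal ((\<Sum>m<N. indicator {real m / real N .. (real m + 1) / real N} x) * (indicator S x * h x)) \<partial>lebesgue) \<le> N * (\<integral>\<^sup>+x. ennreal (indicator S x * h x) \<partial>lebesgue)" by (simp add: ennreal_of_nat_eq_real_of_nat)
qed


lemma transl_set:
  assumes "S \<in> sets lebesgue"
  shows "{t::real. t + c \<in> S} \<in> sets lebesgue"
proof -
  have eq: "{t::real. t + c \<in> S} = (\<lambda>x. - c + x) ` S" by force
  show ?thesis unfolding eq by (rule lebesgue_sets_translation[OF assms])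
qed

locale ctx =
  fixes N :: nat and S :: "real set" and Lam :: "nat \<Rightarrow> real set"
  assumes N: "N > 0" and Smeas[measurable]: "S \<in> sets lebesgue" and S01: "S \<subseteq> {0..1}"
    and LamN: "\<forall>n\<in>{1..N}. Lam n \<subseteq> {real_of_int (int N * k) | k. True}"
begin

definition Jt :: "real \<Rightarrow> nat set" where
  "Jt t = {m \<in> {0..<N}. t + real m / real N \<in> S}"

definition z :: "nat \<Rightarrow> complex" where
  "z m = expo 1 (real m / real N)"

definition sol :: "nat set \<Rightarrow> (nat \<Rightarrow> complex) \<Rightarrow> nat \<Rightarrow> complex" where
  "sol J w j = (\<Sum>m\<in>J. LL z J j m * w m)"

definition Kb :: real where
  "Kb = (\<Sum>J\<in>Pow {0..<N}. \<Sum>j\<in>{1..N}. \<Sum>m\<in>J. cmod (LL z J j m)) + 1"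

lemma Jt_sub: "Jt t \<subseteq> {0..<N}" by (auto simp: Jt_def)
lemma Jt_fin: "finite (Jt t)" using Jt_sub finite_subset by blast
lemma Jt_card: "card (Jt t) \<le> N" using card_mono[OF _ Jt_sub] by fastforce

lemma z_nz: "z m \<noteq> 0" by (simp add: z_def expo_def)

lemma z_pow: "z m ^ j = expo (real j) (real m / real N)"
  by (simp add: z_def expo_pow)

lemma z_inj: "inj_on z {0..<N}"
proof (rule inj_onI)
  fix m m' assume m: "m \<in> {0..<N}" "m' \<in> {0..<N}" and eq: "z m = z m'"
  from eq obtain n :: int where n: "2 * of_real pi * \<i> * of_real (1 * (real m / real N))
      = 2 * of_real pi * \<i> * of_real (1 * (real m' / real N)) + of_int (2 * n) * pi * \<i>"
    by (auto simp: z_def expo_def exp_eq)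
  then have "complex_of_real (2 * pi * (real m / real N)) * \<i> = complex_of_real (2 * pi * (real m' / real N + of_int n)) * \<i>"
    by (simp add: algebra_simps)
  then have "(2 * pi) * (real m / real N) = (2 * pi) * (real m' / real N + of_int n)"
    using of_real_eq_iff by (metis complex_i_not_zero mult_cancel_right)
  moreover have pi2: "2 * pi \<noteq> 0" by simp
  ultimately have "real m / real N = real m' / real N + of_int n" using mult_left_cancel[OF pi2] by blast
  then have e: "real m = real m' + of_int n * real N" using N by (simp add: field_simps)
  have "n = 0"
  proof (rule ccontr)
    assume "n \<noteq> 0"
    then have "1 \<le> \<bar>n\<bar>" by linarith
    then have "1 \<le> \<bar>real_of_int n\<bar>" by (metis of_int_1_le_iff of_int_abs)
    then have "real N \<le> \<bar>real_of_int n\<bar> * real N"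
      using mult_right_mono[of 1 "\<bar>real_of_int n\<bar>" "real N"] by simp
    then have "\<bar>of_int n * real N\<bar> \<ge> real N" by (simp add: abs_mult)
    then show False using e m by auto
  qed
  then show "m = m'" using e by simp
qed

lemma sol_left:
  assumes J: "J \<subseteq> {0..<N}" and j: "j \<in> {1..card J}" and j': "j' \<in> {1..card J}"
  shows "sol J (\<lambda>m. z m ^ j') j = (if j = j' then 1 else 0)"
  unfolding sol_def
  using LL_left[of J z j j'] J j j' finite_subset[OF J] inj_on_subset[OF z_inj J] z_nz by auto

lemma sol_right:
  assumes J: "J \<subseteq> {0..<N}" and m': "m' \<in> J"
  shows "(\<Sum>j\<in>{1..card J}. z m' ^ j * sol J w j) = w m'"
proof -
  have fin: "finite J" using finite_subset[OF J] by simp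
  have "(\<Sum>j\<in>{1..card J}. z m' ^ j * sol J w j) = (\<Sum>m\<in>J. w m * (\<Sum>j\<in>{1..card J}. z m' ^ j * LL z J j m))"
    unfolding sol_def by (simp add: sum_distrib_left sum_distrib_right mult_ac) (rule sum.swap)
  also have "\<dots> = (\<Sum>m\<in>J. w m * (if m = m' then 1 else 0))"
    using LL_right[of J z _ m'] fin inj_on_subset[OF z_inj J] z_nz m' by (intro sum.cong) auto
  also have "\<dots> = w m'" using fin m' by (simp add: if_distrib cong: if_cong)
  finally show ?thesis .
qed

lemma Kb_pos: "Kb > 0"
  unfolding Kb_def by (intro add_nonneg_pos sum_nonneg) auto

lemma LL_bound:
  assumes J: "J \<subseteq> {0..<N}" and j: "j \<in> {1..N}" and m: "m \<in> J"
  shows "cmod (LL z J j m) \<le> Kb"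
proof -
  have fin: "finite J" using finite_subset[OF J] by simp
  have "cmod (LL z J j m) \<le> (\<Sum>m\<in>J. cmod (LL z J j m))"
    using fin m by (intro member_le_sum) auto
  also have "\<dots> \<le> (\<Sum>j\<in>{1..N}. \<Sum>m\<in>J. cmod (LL z J j m))"
    using j by (intro member_le_sum[of j "{1..N}" "\<lambda>j. \<Sum>m\<in>J. cmod (LL z J j m)"]) (auto intro: sum_nonneg)
  also have "\<dots> \<le> (\<Sum>J\<in>Pow {0..<N}. \<Sum>j\<in>{1..N}. \<Sum>m\<in>J. cmod (LL z J j m))"
    using J by (intro member_le_sum[of J "Pow {0..<N}" "\<lambda>J. \<Sum>j\<in>{1..N}. \<Sum>m\<in>J. cmod (LL z J j m)"]) (auto intro!: sum_nonneg)
  also have "\<dots> \<le> Kb" by (simp add: Kb_def)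
  finally show ?thesis .
qed

lemma sq_sum_le:
  fixes f :: "'a \<Rightarrow> real"
  shows "(\<Sum>i\<in>I. f i)\<^sup>2 \<le> card I * (\<Sum>i\<in>I. (f i)\<^sup>2)"
  using Cauchy_Schwarz_ineq_sum[of "\<lambda>_. 1" f I] by (simp add: mult.commute)

lemma sol_bound:
  assumes J: "J \<subseteq> {0..<N}" and j: "j \<in> {1..N}"
  shows "(cmod (sol J w j))\<^sup>2 \<le> Kb\<^sup>2 * N * (\<Sum>m\<in>J. (cmod (w m))\<^sup>2)"
proof -
  have fin: "finite J" using finite_subset[OF J] by simp
  have "cmod (sol J w j) \<le> (\<Sum>m\<in>J. cmod (LL z J j m * w m))"
    unfolding sol_def by (rule norm_sum)
  also have "\<dots> \<le> (\<Sum>m\<in>J. Kb * cmod (w m))"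
    using LL_bound[OF J j] by (intro sum_mono) (simp add: norm_mult mult_right_mono)
  finally have a: "cmod (sol J w j) \<le> Kb * (\<Sum>m\<in>J. cmod (w m))" by (simp add: sum_distrib_left)
  have "(cmod (sol J w j))\<^sup>2 \<le> (Kb * (\<Sum>m\<in>J. cmod (w m)))\<^sup>2"
    using a by (intro power_mono) auto
  also have "\<dots> = Kb\<^sup>2 * (\<Sum>m\<in>J. cmod (w m))\<^sup>2" by (simp add: power_mult_distrib)
  also have "\<dots> \<le> Kb\<^sup>2 * (card J * (\<Sum>m\<in>J. (cmod (w m))\<^sup>2))"
    by (intro mult_left_mono sq_sum_le) auto
  also have "\<dots> \<le> Kb\<^sup>2 * (N * (\<Sum>m\<in>J. (cmod (w m))\<^sup>2))"
    using card_mono[OF _ J] by (intro mult_left_mono mult_right_mono sum_nonneg) auto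
  finally show ?thesis by (simp add: mult_ac)
qed

lemma A_ge_iff:
  "t \<in> A_ge N S n \<longleftrightarrow> t \<in> {0..1/N} \<and> n \<le> card (Jt t)"
  using Jt_card[of t] by (auto simp: A_ge_def A_set_def Jt_def)

lemma A_ge_sub: "A_ge N S n \<subseteq> {0..1/N}"
  using A_ge_iff by auto

lemma Icc_leb[measurable]: "{a..b::real} \<in> sets lebesgue"
  by simp

lemma pred_transl[measurable]: "Measurable.pred lebesgue (\<lambda>t. t + c \<in> S)"
  using transl_set[OF Smeas, of c] by (simp add: Measurable.pred_def)

lemma sets_Jt[measurable]: "{t. Jt t = J} \<in> sets lebesgue"
proof (cases "J \<subseteq> {0..<N}")
  case True
  then have fin: "finite J" using finite_subset by blast
  have "{t. Jt t = J} = {t. (\<forall>m\<in>J. t + real m / real N \<in> S) \<and> (\<forall>m\<in>{0..<N}-J. t + real m / real N \<notin> S)}"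
    using True by (auto simp: Jt_def)
  also have "\<dots> = {t\<in>space lebesgue. (\<forall>m\<in>J. t + real m / real N \<in> S) \<and> (\<forall>m\<in>{0..<N}-J. t + real m / real N \<notin> S)}"
    by simp
  also have "\<dots> \<in> sets lebesgue" using fin by measurable
  finally show ?thesis .
next
  case False
  then have "{t. Jt t = J} = {}" using Jt_sub by auto
  then show ?thesis by simp
qed

lemma pred_Jt[measurable]: "Measurable.pred lebesgue (\<lambda>t. Jt t = J)"
  using sets_Jt by (simp add: Measurable.pred_def)

lemma sets_A_ge[measurable]: "A_ge N S n \<in> sets lebesgue"
proof -
  have "A_ge N S n = {t. t \<in> {0..1/N} \<and> (\<exists>J\<in>Pow {0..<N}. Jt t = J \<and> n \<le> card J)}"
    using A_ge_iff Jt_sub by auto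
  also have "\<dots> \<in> sets lebesgue" by measurable
  finally show ?thesis .
qed

end


lemma fib_ge_real:
  fixes h :: "real \<Rightarrow> real" and N :: nat
  assumes N: "N > 0" and S[measurable]: "S \<in> sets lebesgue" and h[measurable]: "h \<in> borel_measurable lebesgue" and h0: "\<And>x. 0 \<le> h x"
    and int: "integrable lebesgue (\<lambda>x. indicator S x * h x)"
  shows "(LINT t|lebesgue. indicator {0..1/N} t * (\<Sum>m<N. indicator S (t + m/N) * h (t + m/N)))
    \<le> N * (LINT x|lebesgue. indicator S x * h x)"
proof -
  have m1: "(\<lambda>t. indicator S (t + c) * h (t + c)) \<in> borel_measurable lebesgue" for c
    by (rule meas_transl[where f="\<lambda>x. indicator S x * h x"]) measurable
  have meas: "(\<lambda>t. indicator {0..1/N} t * (\<Sum>m<N. indicator S (t + m/N) * h (t + m/N))) \<in> borel_measurable lebesgue"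
    using m1 by measurable
  have X: "(\<integral>\<^sup>+x. ennreal (indicator S x * h x) \<partial>lebesgue) = ennreal (LINT x|lebesgue. indicator S x * h x)"
    using int h0 by (intro nn_integral_eq_integral) auto
  have "(LINT t|lebesgue. indicator {0..1/N} t * (\<Sum>m<N. indicator S (t + m/N) * h (t + m/N)))
      = enn2real (\<integral>\<^sup>+t. ennreal (indicator {0..1/N} t * (\<Sum>m<N. indicator S (t + m/N) * h (t + m/N))) \<partial>lebesgue)"
    using meas h0 by (intro integral_eq_nn_integral) (auto intro!: mult_nonneg_nonneg sum_nonneg)
  also have "\<dots> \<le> N * (LINT x|lebesgue. indicator S x * h x)"
  proof -
    have I0: "0 \<le> (LINT x|lebesgue. indicator S x * h x)"
      using h0 by (intro Bochner_Integration.integral_nonneg) auto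
    have em: "ennreal (N * (LINT x|lebesgue. indicator S x * h x)) = ennreal N * ennreal (LINT x|lebesgue. indicator S x * h x)"
      by (rule ennreal_mult) (auto simp: I0)
    have le: "(\<integral>\<^sup>+t. ennreal (indicator {0..1/N} t * (\<Sum>m<N. indicator S (t + m/N) * h (t + m/N))) \<partial>lebesgue)
        \<le> ennreal (N * (LINT x|lebesgue. indicator S x * h x))"
      unfolding em using fib_ge[OF N S h h0] X
      by (simp add: ennreal_of_nat_eq_real_of_nat)
    have nn: "0 \<le> N * (LINT x|lebesgue. indicator S x * h x)"
      using h0 by (intro mult_nonneg_nonneg Bochner_Integration.integral_nonneg) auto
    show ?thesis using enn2real_mono[OF le] nn by simp
  qed
  finally show ?thesis .
qed

lemma parseval_leb:
  fixes a :: "real \<Rightarrow> complex"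
  assumes "P > 0" "finite F" and sep: "\<And>l m. l \<in> F \<Longrightarrow> m \<in> F \<Longrightarrow> (l - m) * P \<in> \<int>"
  shows "(LINT t|lebesgue. indicator {0..P} t * (cmod (\<Sum>l\<in>F. a l * expo l t))\<^sup>2) = P * (\<Sum>l\<in>F. (cmod (a l))\<^sup>2)"
proof -
  have "(\<lambda>t. indicator {0..P} t * (cmod (\<Sum>l\<in>F. a l * expo l t))\<^sup>2) \<in> borel_measurable lborel"
  proof -
    have "continuous_on UNIV (\<lambda>t. (cmod (\<Sum>l\<in>F. a l * expo l t))\<^sup>2)"
      by (intro continuous_intros)
    then have "(\<lambda>t. (cmod (\<Sum>l\<in>F. a l * expo l t))\<^sup>2) \<in> borel_measurable borel"
      by (rule borel_measurable_continuous_onI)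
    moreover have "(indicator {0..P} :: real \<Rightarrow> real) \<in> borel_measurable borel"
      by (rule borel_measurable_indicator) simp
    ultimately have "(\<lambda>t. indicator {0..P} t * (cmod (\<Sum>l\<in>F. a l * expo l t))\<^sup>2) \<in> borel_measurable borel"
      by (intro borel_measurable_times)
    then show ?thesis by (simp add: measurable_lborel2)
  qed
  then show ?thesis using parseval_lborel[OF assms] by (simp add: integral_completion)
qed

context ctx
begin

definition lay :: "nat \<Rightarrow> real set" where
  "lay j = (\<lambda>x. x + real j) ` Lam j"

definition Lamb :: "real set" where
  "Lamb = (\<Union>j\<in>{1..N}. lay j)"

lemma lay_form:
  assumes "j \<in> {1..N}" "l \<in> lay j"
  shows "\<exists>k::int. l = real_of_int (int N * k) + real j"
proof -
  from assms obtain x where x: "x \<in> Lam j" "l = x + real j" by (auto simp: lay_def)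
  with LamN assms(1) have "x \<in> {real_of_int (int N * k) | k. True}" by blast
  then obtain k where "x = real_of_int (int N * k)" by blast
  then show ?thesis using x by blast
qed

lemma lay_disj:
  assumes j: "j \<in> {1..N}" "j' \<in> {1..N}" "j \<noteq> j'"
  shows "lay j \<inter> lay j' = {}"
proof (rule ccontr)
  assume "lay j \<inter> lay j' \<noteq> {}"
  then obtain l where l: "l \<in> lay j" "l \<in> lay j'" by auto
  obtain k where k: "l = real_of_int (int N * k) + real j" using lay_form[OF j(1) l(1)] by auto
  obtain k' where k': "l = real_of_int (int N * k') + real j'" using lay_form[OF j(2) l(2)] by auto
  have "real_of_int (int N * k + int j) = real_of_int (int N * k' + int j')" using k k' by simp
  then have "int N * k + int j = int N * k' + int j'" by (simp only: of_int_eq_iff)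
  then have e: "int N * (k - k') = int j' - int j" by (simp add: algebra_simps)
  have "\<bar>int j' - int j\<bar> < int N" using j by auto
  moreover have "k - k' \<noteq> 0" using e j by auto
  then have "\<bar>int N * (k - k')\<bar> \<ge> int N" using N by (simp add: abs_mult)
  ultimately show False using e by simp
qed

lemma expo_lay:
  assumes "j \<in> {1..N}" "l \<in> lay j"
  shows "expo l (t + real m / real N) = expo l t * z m ^ j"
proof -
  obtain k where k: "l = real_of_int (int N * k) + real j" using lay_form[OF assms] by auto
  have "expo (real_of_int (int N * k)) (real m / real N) = 1"
  proof (rule expo_int)
    have "real_of_int (int N * k) * (real m / real N) = of_int (k * int m)" using N by simp
    then show "real_of_int (int N * k) * (real m / real N) \<in> \<int>" by simp
  qed
  then have "expo l (real m / real N) = z m ^ j"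
    by (simp add: k expo_add_freq z_pow)
  then show ?thesis by (simp add: expo_add_time)
qed

lemma lay_sep:
  assumes "j \<in> {1..N}" "l \<in> lay j" "l' \<in> lay j"
  shows "(l - l') * (1 / real N) \<in> \<int>"
proof -
  obtain k where k: "l = real_of_int (int N * k) + real j" using lay_form[OF assms(1,2)] by auto
  obtain k' where k': "l' = real_of_int (int N * k') + real j" using lay_form[OF assms(1,3)] by auto
  have "(l - l') * (1 / real N) = of_int (k - k')" using N by (simp add: k k' field_simps)
  then show ?thesis by simp
qed

lemma Lamb_sep:
  assumes "l \<in> Lamb" "l' \<in> Lamb"
  shows "(l - l') * 1 \<in> \<int>"
proof -
  have "l \<in> \<int>" if "l \<in> Lamb" for l
  proof -
    from that obtain j where j: "j \<in> {1..N}" "l \<in> lay j" by (auto simp: Lamb_def)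
    obtain k where k: "l = real_of_int (int N * k) + real j" using lay_form[OF j] by auto
    then show ?thesis by simp
  qed
  then show ?thesis using assms by simp
qed

end


lemma sq_diff_le: "(cmod (x - y))\<^sup>2 \<le> 2 * (cmod x)\<^sup>2 + 2 * (cmod y)\<^sup>2"
proof -
  have "cmod (x - y) \<le> cmod x + cmod y" by (rule norm_triangle_ineq4)
  then have "(cmod (x - y))\<^sup>2 \<le> (cmod x + cmod y)\<^sup>2" by (intro power_mono) auto
  also have "\<dots> \<le> 2 * (cmod x)\<^sup>2 + 2 * (cmod y)\<^sup>2"
  proof -
    have "(cmod x + cmod y)\<^sup>2 + (cmod x - cmod y)\<^sup>2 = 2 * (cmod x)\<^sup>2 + 2 * (cmod y)\<^sup>2"
      by (simp add: power2_eq_square algebra_simps)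
    moreover have "0 \<le> (cmod x - cmod y)\<^sup>2" by simp
    ultimately show ?thesis by linarith
  qed
  finally show ?thesis .
qed

context ctx
begin

definition V :: "real set \<Rightarrow> (real \<Rightarrow> complex) \<Rightarrow> nat \<Rightarrow> real \<Rightarrow> complex" where
  "V F a j t = (\<Sum>l\<in>F \<inter> lay j. a l * expo l t)"

lemma sol_lin:
  "sol J (\<lambda>m. \<Sum>i\<in>I. c i * f i m) j = (\<Sum>i\<in>I. c i * sol J (f i) j)"
  unfolding sol_def by (simp add: sum_distrib_left mult_ac) (rule sum.swap)

lemma F_split:
  assumes "F \<subseteq> Lamb"
  shows "F = (\<Union>j\<in>{1..N}. F \<inter> lay j)"
  using assms by (auto simp: Lamb_def)

lemma g_split:
  assumes "finite F" "F \<subseteq> Lamb"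
  shows "(\<Sum>l\<in>F. f l) = (\<Sum>j\<in>{1..N}. \<Sum>l\<in>F \<inter> lay j. f l)"
proof -
  have d: "\<forall>i\<in>{1..N}. \<forall>j\<in>{1..N}. i \<noteq> j \<longrightarrow> (F \<inter> lay i) \<inter> (F \<inter> lay j) = {}"
    using lay_disj by blast
  have "(\<Sum>l\<in>F. f l) = (\<Sum>l\<in>(\<Union>j\<in>{1..N}. F \<inter> lay j). f l)"
    using F_split[OF assms(2)] by simp
  also have "\<dots> = (\<Sum>j\<in>{1..N}. \<Sum>l\<in>F \<inter> lay j. f l)"
    by (rule sum.UNION_disjoint) (use assms(1) d in auto)
  finally show ?thesis .
qed

lemma V_shift:
  assumes "j \<in> {1..N}"
  shows "V F a j (t + real m / real N) = z m ^ j * V F a j t"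
  unfolding V_def using expo_lay[OF assms] by (simp add: sum_distrib_left mult_ac)

lemma sum_Jt:
  fixes f :: "nat \<Rightarrow> real"
  shows "(\<Sum>m\<in>Jt t. f m) = (\<Sum>m<N. indicator S (t + real m / real N) * f m)"
proof -
  have "(\<Sum>m\<in>Jt t. f m) = (\<Sum>m\<in>{0..<N}. if t + real m / real N \<in> S then f m else 0)"
    unfolding Jt_def by (rule sum.inter_filter) simp
  also have "\<dots> = (\<Sum>m<N. indicator S (t + real m / real N) * f m)"
    by (intro sum.cong) (auto simp: indicator_def)
  finally show ?thesis .
qed

lemma core:
  assumes F: "finite F" "F \<subseteq> Lamb" and j: "j \<in> {1..N}" and t: "t \<in> A_ge N S j"
  shows "(cmod (V F a j t))\<^sup>2 \<le> 2 * Kb\<^sup>2 * N * (\<Sum>m<N. indicator S (t + real m / real N) * (cmod (\<Sum>l\<in>F. a l * expo l (t + real m / real N)))\<^sup>2)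
     + 2 * Kb\<^sup>2 * N^3 * (\<Sum>j'\<in>{j<..N}. (cmod (V F a j' t))\<^sup>2)"
proof -
  define J where "J = Jt t"
  define k where "k = card J"
  have J: "J \<subseteq> {0..<N}" using Jt_sub by (simp add: J_def)
  have jk: "j \<le> k" using t by (simp add: A_ge_iff k_def J_def)
  have kN: "k \<le> N" using Jt_card by (simp add: k_def J_def)
  define w where "w m = (\<Sum>l\<in>F. a l * expo l (t + real m / real N))" for m
  have w: "w m = (\<Sum>j'\<in>{1..N}. V F a j' t * z m ^ j')" for m
    unfolding w_def g_split[OF F] V_def[symmetric] using V_shift
    by (intro sum.cong refl) (simp add: V_def[symmetric] mult.commute)
  define s where "s j' = sol J (\<lambda>m. z m ^ j') j" for j'
  have wl: "w = (\<lambda>m. \<Sum>j'\<in>{1..N}. V F a j' t * z m ^ j')" by (rule ext, rule w)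
  have sw: "sol J w j = (\<Sum>j'\<in>{1..N}. V F a j' t * s j')"
    unfolding s_def wl by (rule sol_lin)
  have split: "{1..N} = {1..k} \<union> {k<..N}" using kN by auto
  have "(\<Sum>j'\<in>{1..N}. V F a j' t * s j') = (\<Sum>j'\<in>{1..k}. V F a j' t * s j') + (\<Sum>j'\<in>{k<..N}. V F a j' t * s j')"
    unfolding split by (rule sum.union_disjoint) auto
  also have "(\<Sum>j'\<in>{1..k}. V F a j' t * s j') = (\<Sum>j'\<in>{1..k}. if j' = j then V F a j' t else 0)"
    using j jk by (intro sum.cong refl) (auto simp: s_def sol_left[OF J] k_def)
  also have "\<dots> = V F a j t" using j jk by simp
  finally have eq: "V F a j t = sol J w j - (\<Sum>j'\<in>{k<..N}. V F a j' t * s j')"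
    using sw by simp
  have sb: "cmod (s j') \<le> Kb * N" for j'
  proof -
    have "(cmod (s j'))\<^sup>2 \<le> Kb\<^sup>2 * N * (\<Sum>m\<in>J. (cmod (z m ^ j'))\<^sup>2)"
      unfolding s_def using sol_bound[OF J j] .
    also have "\<dots> = Kb\<^sup>2 * N * k" by (simp add: z_def norm_power k_def)
    also have "\<dots> \<le> Kb\<^sup>2 * N * N" using kN by (intro mult_left_mono) auto
    also have "\<dots> = (Kb * N)\<^sup>2" by (simp add: power2_eq_square)
    finally have h: "(cmod (s j'))\<^sup>2 \<le> (Kb * N)\<^sup>2" .
    have "0 \<le> Kb * N" using Kb_pos by simp
    then show ?thesis by (rule power2_le_imp_le[OF h])
  qed
  have Rb: "cmod (\<Sum>j'\<in>{k<..N}. V F a j' t * s j') \<le> Kb * N * (\<Sum>j'\<in>{k<..N}. cmod (V F a j' t))"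
  proof -
    have X: "cmod (\<Sum>j'\<in>{k<..N}. V F a j' t * s j') \<le> (\<Sum>j'\<in>{k<..N}. cmod (V F a j' t) * (Kb * N))"
      by (rule order.trans[OF norm_sum], intro sum_mono) (simp add: norm_mult sb mult_left_mono)
    have e: "(\<Sum>j'\<in>{k<..N}. cmod (V F a j' t) * (Kb * N)) = Kb * N * (\<Sum>j'\<in>{k<..N}. cmod (V F a j' t))"
      by (subst sum_distrib_right[symmetric]) (simp add: mult.commute)
    show ?thesis using X e by linarith
  qed
  have R2: "(cmod (\<Sum>j'\<in>{k<..N}. V F a j' t * s j'))\<^sup>2 \<le> Kb\<^sup>2 * N^3 * (\<Sum>j'\<in>{j<..N}. (cmod (V F a j' t))\<^sup>2)"
  proof -
    have "(cmod (\<Sum>j'\<in>{k<..N}. V F a j' t * s j'))\<^sup>2 \<le> (Kb * N * (\<Sum>j'\<in>{k<..N}. cmod (V F a j' t)))\<^sup>2"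
      using Rb by (intro power_mono) auto
    also have "\<dots> = (Kb * N)\<^sup>2 * (\<Sum>j'\<in>{k<..N}. cmod (V F a j' t))\<^sup>2" by (simp add: power_mult_distrib)
    also have "\<dots> \<le> (Kb * N)\<^sup>2 * (card {k<..N} * (\<Sum>j'\<in>{k<..N}. (cmod (V F a j' t))\<^sup>2))"
      by (intro mult_left_mono sq_sum_le) auto
    also have "\<dots> \<le> (Kb * N)\<^sup>2 * (N * (\<Sum>j'\<in>{j<..N}. (cmod (V F a j' t))\<^sup>2))"
    proof (intro mult_left_mono mult_mono)
      show "real (card {k<..N}) \<le> real N" by simp
      show "(\<Sum>j'\<in>{k<..N}. (cmod (V F a j' t))\<^sup>2) \<le> (\<Sum>j'\<in>{j<..N}. (cmod (V F a j' t))\<^sup>2)"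
        using jk by (intro sum_mono2) auto
    qed (auto intro: sum_nonneg)
    also have "\<dots> = Kb\<^sup>2 * N^3 * (\<Sum>j'\<in>{j<..N}. (cmod (V F a j' t))\<^sup>2)"
      by (simp add: power2_eq_square power3_eq_cube mult_ac)
    finally show ?thesis .
  qed
  have "(cmod (V F a j t))\<^sup>2 \<le> 2 * (cmod (sol J w j))\<^sup>2 + 2 * (cmod (\<Sum>j'\<in>{k<..N}. V F a j' t * s j'))\<^sup>2"
    unfolding eq by (rule sq_diff_le)
  also have "\<dots> \<le> 2 * (Kb\<^sup>2 * N * (\<Sum>m\<in>J. (cmod (w m))\<^sup>2)) + 2 * (Kb\<^sup>2 * N^3 * (\<Sum>j'\<in>{j<..N}. (cmod (V F a j' t))\<^sup>2))"
    using sol_bound[OF J j, of w] R2 by linarith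
  also have "(\<Sum>m\<in>J. (cmod (w m))\<^sup>2) = (\<Sum>m<N. indicator S (t + real m / real N) * (cmod (\<Sum>l\<in>F. a l * expo l (t + real m / real N)))\<^sup>2)"
    unfolding J_def sum_Jt w_def ..
  finally show ?thesis by (simp add: mult_ac)
qed

end


lemma es_meas[measurable]: "(\<lambda>t. \<Sum>l\<in>F. a l * expo l t) \<in> borel_measurable lebesgue"
  by (intro meas_cont continuous_intros)

lemma es_bound: "cmod (\<Sum>l\<in>F. a l * expo l t) \<le> (\<Sum>l\<in>F. cmod (a l))"
  by (rule order.trans[OF norm_sum]) (simp add: norm_mult)

lemma es_sq_meas[measurable]: "(\<lambda>t. (cmod (\<Sum>l\<in>F. a l * expo l t))\<^sup>2) \<in> borel_measurable lebesgue"
  by measurable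

lemma es_sq_bound: "(cmod (\<Sum>l\<in>F. a l * expo l t))\<^sup>2 \<le> (\<Sum>l\<in>F. cmod (a l))\<^sup>2"
  by (intro power_mono es_bound) auto

context ctx
begin

definition Qf :: "real set \<Rightarrow> (real \<Rightarrow> complex) \<Rightarrow> real \<Rightarrow> real" where
  "Qf F a t = (\<Sum>m<N. indicator S (t + real m / real N) * (cmod (\<Sum>l\<in>F. a l * expo l (t + real m / real N)))\<^sup>2)"

lemma Qf_meas[measurable]: "Qf F a \<in> borel_measurable lebesgue"
proof -
  have "(\<lambda>t. indicator S (t + c) * (cmod (\<Sum>l\<in>F. a l * expo l (t + c)))\<^sup>2) \<in> borel_measurable lebesgue" for c
    by (rule meas_transl[where f="\<lambda>x. indicator S x * (cmod (\<Sum>l\<in>F. a l * expo l x))\<^sup>2"]) measurable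
  then show ?thesis unfolding Qf_def[abs_def] by measurable
qed

lemma Qf_nonneg: "0 \<le> Qf F a t"
  unfolding Qf_def by (intro sum_nonneg) auto

lemma Qf_bound: "Qf F a t \<le> N * (\<Sum>l\<in>F. cmod (a l))\<^sup>2"
proof -
  have "Qf F a t \<le> (\<Sum>m<N. (\<Sum>l\<in>F. cmod (a l))\<^sup>2)"
    unfolding Qf_def
  proof (intro sum_mono)
    fix m
    show "indicator S (t + real m / real N) * (cmod (\<Sum>l\<in>F. a l * expo l (t + real m / real N)))\<^sup>2 \<le> (\<Sum>l\<in>F. cmod (a l))\<^sup>2"
      using es_sq_bound[where a=a and F=F] by (simp add: indicator_def)
  qed
  then show ?thesis by simp
qed

lemma V_bound: "cmod (V F a j t) \<le> (\<Sum>l\<in>F. cmod (a l))" if "finite F"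
proof -
  have "cmod (V F a j t) \<le> (\<Sum>l\<in>F \<inter> lay j. cmod (a l))" unfolding V_def by (rule es_bound)
  also have "\<dots> \<le> (\<Sum>l\<in>F. cmod (a l))" using that by (intro sum_mono2) auto
  finally show ?thesis .
qed

lemma V_meas[measurable]: "(\<lambda>t. (cmod (V F a j t))\<^sup>2) \<in> borel_measurable lebesgue"
  unfolding V_def by measurable

lemma fib_Q:
  assumes F: "finite F"
  shows "(LINT t|lebesgue. indicator {0..1/N} t * Qf F a t) \<le> N * L2_norm_sq S (\<lambda>t. \<Sum>l\<in>F. a l * expo l t)"
proof -
  have int: "integrable lebesgue (\<lambda>x. indicator S x * (cmod (\<Sum>l\<in>F. a l * expo l x))\<^sup>2)"
    using S01 es_sq_bound[where a=a and F=F] by (intro integrable_bdd[where a=0 and b=1 and B="(\<Sum>l\<in>F. cmod (a l))\<^sup>2"]) auto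
  have "(LINT t|lebesgue. indicator {0..1/N} t * Qf F a t)
     = (LINT t|lebesgue. indicator {0..1/N} t * (\<Sum>m<N. indicator S (t + m/N) * (cmod (\<Sum>l\<in>F. a l * expo l (t + m/N)))\<^sup>2))"
    by (simp add: Qf_def)
  also have "\<dots> \<le> N * (LINT x|lebesgue. indicator S x * (cmod (\<Sum>l\<in>F. a l * expo l x))\<^sup>2)"
    by (rule fib_ge_real[OF N Smeas _ _ int]) auto
  finally show ?thesis by (simp add: L2_norm_sq_def)
qed

lemma layer_ineq:
  assumes F: "finite F" "F \<subseteq> Lamb" and j: "j \<in> {1..N}" and c: "c > 0"
    and Rj: "\<forall>F' a'. finite F' \<longrightarrow> F' \<subseteq> Lam j \<longrightarrow>
        c * (\<Sum>l\<in>F'. (cmod (a' l))\<^sup>2) \<le> L2_norm_sq (A_ge N S j) (\<lambda>t. \<Sum>l\<in>F'. a' l * expo l t)"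
  shows "c * (\<Sum>l\<in>F \<inter> lay j. (cmod (a l))\<^sup>2) \<le> 2 * Kb\<^sup>2 * N * N * L2_norm_sq S (\<lambda>t. \<Sum>l\<in>F. a l * expo l t)
      + 2 * Kb\<^sup>2 * N^3 * (\<Sum>j'\<in>{j<..N}. (1 / N) * (\<Sum>l\<in>F \<inter> lay j'. (cmod (a l))\<^sup>2))"
proof -
  define F' where "F' = {\<mu> \<in> Lam j. \<mu> + real j \<in> F}"
  have bij: "bij_betw (\<lambda>x. x + real j) F' (F \<inter> lay j)"
    by (rule bij_betwI[where g="\<lambda>x. x - real j"]) (auto simp: F'_def lay_def)
  have F'fin: "finite F'" using bij_betw_finite[OF bij] F by simp
  have F'sub: "F' \<subseteq> Lam j" by (auto simp: F'_def)
  define a' where "a' \<mu> = a (\<mu> + real j)" for \<mu>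
  have E: "(\<Sum>l\<in>F'. (cmod (a' l))\<^sup>2) = (\<Sum>l\<in>F \<inter> lay j. (cmod (a l))\<^sup>2)"
    unfolding a'_def using sum.reindex_bij_betw[OF bij, of "\<lambda>l. (cmod (a l))\<^sup>2"] by simp
  have G: "(cmod (\<Sum>l\<in>F'. a' l * expo l t))\<^sup>2 = (cmod (V F a j t))\<^sup>2" for t
  proof -
    have "V F a j t = (\<Sum>l\<in>F'. a (l + real j) * expo (l + real j) t)"
      unfolding V_def using sum.reindex_bij_betw[OF bij, of "\<lambda>l. a l * expo l t"] by simp
    also have "\<dots> = expo (real j) t * (\<Sum>l\<in>F'. a' l * expo l t)"
      by (simp add: a'_def expo_add_freq sum_distrib_left mult_ac)
    finally show ?thesis by (simp add: norm_mult)
  qed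
  have step1: "c * (\<Sum>l\<in>F \<inter> lay j. (cmod (a l))\<^sup>2) \<le> (LINT t|lebesgue. indicator (A_ge N S j) t * (cmod (V F a j t))\<^sup>2)"
    using Rj[rule_format, OF F'fin F'sub, of a'] by (simp add: E G L2_norm_sq_def)
  define Ma where "Ma = (\<Sum>l\<in>F. cmod (a l))"
  have Ma0: "0 \<le> Ma" by (simp add: Ma_def sum_nonneg)
  define C1 where "C1 = 2 * Kb\<^sup>2 * N"
  define C2 where "C2 = 2 * Kb\<^sup>2 * N^3"
  have C1: "0 \<le> C1" and C2: "0 \<le> C2" by (simp_all add: C1_def C2_def)
  have Vsq: "(cmod (V F a j' t))\<^sup>2 \<le> Ma\<^sup>2" for j' t
    unfolding Ma_def using V_bound[OF F(1), of a j' t] by (intro power_mono) auto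
  have intV: "integrable lebesgue (\<lambda>t. indicator {0..1/N} t * (cmod (V F a j' t))\<^sup>2)" for j'
    using Vsq by (intro integrable_bdd[where a=0 and b="1/N" and B="Ma\<^sup>2"]) auto
  have intQ: "integrable lebesgue (\<lambda>t. indicator {0..1/N} t * Qf F a t)"
    using Qf_bound[of F a] Qf_nonneg[of F a]
    by (intro integrable_bdd[where a=0 and b="1/N" and B="N * Ma\<^sup>2"]) (auto simp: Ma_def)
  have intL: "integrable lebesgue (\<lambda>t. indicator (A_ge N S j) t * (cmod (V F a j t))\<^sup>2)"
    using Vsq A_ge_sub by (intro integrable_bdd[where a=0 and b="1/N" and B="Ma\<^sup>2"]) auto
  have ptw: "indicator (A_ge N S j) t * (cmod (V F a j t))\<^sup>2 \<le>
      C1 * (indicator {0..1/N} t * Qf F a t) + (\<Sum>j'\<in>{j<..N}. C2 * (indicator {0..1/N} t * (cmod (V F a j' t))\<^sup>2))" for t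
  proof (cases "t \<in> A_ge N S j")
    case True
    then have "t \<in> {0..1/N}" using A_ge_sub[of j] by blast
    then show ?thesis using core[OF F j True, of a] True
      by (simp add: Qf_def C1_def C2_def sum_distrib_left mult_ac)
  next
    case False
    have a1: "0 \<le> C1 * (indicator {0..1/N} t * Qf F a t)"
      using C1 Qf_nonneg[of F a t] by (intro mult_nonneg_nonneg) auto
    have a2: "0 \<le> (\<Sum>j'\<in>{j<..N}. C2 * (indicator {0..1/N} t * (cmod (V F a j' t))\<^sup>2))"
      using C2 by (intro sum_nonneg mult_nonneg_nonneg) auto
    show ?thesis using False a1 a2 by simp
  qed
  have "(LINT t|lebesgue. indicator (A_ge N S j) t * (cmod (V F a j t))\<^sup>2)
      \<le> (LINT t|lebesgue. C1 * (indicator {0..1/N} t * Qf F a t) + (\<Sum>j'\<in>{j<..N}. C2 * (indicator {0..1/N} t * (cmod (V F a j' t))\<^sup>2)))"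
    by (rule integral_mono[OF intL _ ptw])
       (intro Bochner_Integration.integrable_add integrable_mult_right Bochner_Integration.integrable_sum intQ intV)
  also have "\<dots> = C1 * (LINT t|lebesgue. indicator {0..1/N} t * Qf F a t) + (\<Sum>j'\<in>{j<..N}. C2 * (LINT t|lebesgue. indicator {0..1/N} t * (cmod (V F a j' t))\<^sup>2))"
    by (subst Bochner_Integration.integral_add)
       (auto intro!: integrable_mult_right Bochner_Integration.integrable_sum intQ intV
             simp: Bochner_Integration.integral_sum intV)
  also have "\<dots> \<le> C1 * (N * L2_norm_sq S (\<lambda>t. \<Sum>l\<in>F. a l * expo l t)) + (\<Sum>j'\<in>{j<..N}. C2 * ((1 / N) * (\<Sum>l\<in>F \<inter> lay j'. (cmod (a l))\<^sup>2)))"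
  proof (intro add_mono mult_left_mono sum_mono C1 C2 fib_Q F eq_refl)
    fix j' assume j': "j' \<in> {j<..N}"
    then have j'': "j' \<in> {1..N}" using j by auto
    show "(LINT t|lebesgue. indicator {0..1/N} t * (cmod (V F a j' t))\<^sup>2) = (1 / N) * (\<Sum>l\<in>F \<inter> lay j'. (cmod (a l))\<^sup>2)"
      unfolding V_def using F(1) N lay_sep[OF j''] by (intro parseval_leb) auto
  qed
  finally have X: "(LINT t|lebesgue. indicator (A_ge N S j) t * (cmod (V F a j t))\<^sup>2)
      \<le> C1 * (N * L2_norm_sq S (\<lambda>t. \<Sum>l\<in>F. a l * expo l t)) + (\<Sum>j'\<in>{j<..N}. C2 * ((1 / N) * (\<Sum>l\<in>F \<inter> lay j'. (cmod (a l))\<^sup>2)))" .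
  have e1: "(\<Sum>j'\<in>{j<..N}. C2 * ((1 / N) * (\<Sum>l\<in>F \<inter> lay j'. (cmod (a l))\<^sup>2)))
      = 2 * Kb\<^sup>2 * N^3 * (\<Sum>j'\<in>{j<..N}. (1 / N) * (\<Sum>l\<in>F \<inter> lay j'. (cmod (a l))\<^sup>2))"
    unfolding C2_def by (rule sum_distrib_left[symmetric])
  have e2: "C1 * (N * L2_norm_sq S (\<lambda>t. \<Sum>l\<in>F. a l * expo l t)) = 2 * Kb\<^sup>2 * N * N * L2_norm_sq S (\<lambda>t. \<Sum>l\<in>F. a l * expo l t)"
    unfolding C1_def by (simp only: mult.assoc)
  show ?thesis using step1 X unfolding e1 e2 by linarith
qed

end


context ctx
begin

lemma L2_nonneg: "0 \<le> L2_norm_sq A f"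
  unfolding L2_norm_sq_def by (intro Bochner_Integration.integral_nonneg) auto

lemma lower:
  assumes R: "\<forall>n\<in>{1..N}. \<exists>c>0. \<forall>F' a'. finite F' \<longrightarrow> F' \<subseteq> Lam n \<longrightarrow>
        c * (\<Sum>l\<in>F'. (cmod (a' l))\<^sup>2) \<le> L2_norm_sq (A_ge N S n) (\<lambda>t. \<Sum>l\<in>F'. a' l * expo l t)"
  shows "\<exists>D>0. \<forall>F a. finite F \<longrightarrow> F \<subseteq> Lamb \<longrightarrow>
     (\<Sum>l\<in>F. (cmod (a l))\<^sup>2) \<le> D * L2_norm_sq S (\<lambda>t. \<Sum>l\<in>F. a l * expo l t)"
proof -
  from R obtain cf where cf: "\<forall>n\<in>{1..N}. cf n > 0 \<and> (\<forall>F' a'. finite F' \<longrightarrow> F' \<subseteq> Lam n \<longrightarrow>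
        cf n * (\<Sum>l\<in>F'. (cmod (a' l))\<^sup>2) \<le> L2_norm_sq (A_ge N S n) (\<lambda>t. \<Sum>l\<in>F'. a' l * expo l t))"
    using bchoice[OF R] by blast
  define E where "E F a j = (\<Sum>l\<in>F \<inter> lay j. (cmod (a l))\<^sup>2)" for F and a :: "real \<Rightarrow> complex" and j
  define Ng where "Ng F a = L2_norm_sq S (\<lambda>t. \<Sum>l\<in>F. a l * expo l t)" for F and a :: "real \<Rightarrow> complex"
  have E0: "0 \<le> E F a j" for F a j by (simp add: E_def sum_nonneg)
  have Ng0: "0 \<le> Ng F a" for F a by (simp add: Ng_def L2_nonneg)
  have claim: "\<exists>D\<ge>0. \<forall>F a. finite F \<longrightarrow> F \<subseteq> Lamb \<longrightarrow> (\<Sum>j\<in>{N - i<..N}. E F a j) \<le> D * Ng F a" if "i \<le> N" for i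
    using that
  proof (induction i)
    case 0
    then show ?case by (intro exI[of _ 0]) auto
  next
    case (Suc i)
    then obtain D where D: "D \<ge> 0" "\<forall>F a. finite F \<longrightarrow> F \<subseteq> Lamb \<longrightarrow> (\<Sum>j\<in>{N - i<..N}. E F a j) \<le> D * Ng F a"
      by auto
    define j0 where "j0 = N - i"
    have j0: "j0 \<in> {1..N}" using Suc.prems by (auto simp: j0_def)
    have c0: "cf j0 > 0" and Rj: "\<forall>F' a'. finite F' \<longrightarrow> F' \<subseteq> Lam j0 \<longrightarrow>
        cf j0 * (\<Sum>l\<in>F'. (cmod (a' l))\<^sup>2) \<le> L2_norm_sq (A_ge N S j0) (\<lambda>t. \<Sum>l\<in>F'. a' l * expo l t)"
      using cf j0 by auto
    define A where "A = 2 * Kb\<^sup>2 * N * N"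
    define B where "B = 2 * Kb\<^sup>2 * N^3"
    have A0: "0 \<le> A" and B0: "0 \<le> B" by (simp_all add: A_def B_def)
    define D' where "D' = D + (A + B * (1 / N) * D) / cf j0"
    have set: "{N - Suc i<..N} = insert j0 {N - i<..N}" using Suc.prems by (auto simp: j0_def)
    show ?case
    proof (intro exI[of _ D'] conjI allI impI)
      show "0 \<le> D'" using D(1) A0 B0 c0 by (simp add: D'_def)
      fix F a assume F: "finite F" "F \<subseteq> Lamb"
      have li: "cf j0 * E F a j0 \<le> A * Ng F a + B * (\<Sum>j'\<in>{j0<..N}. (1 / N) * E F a j')"
        using layer_ineq[OF F j0 c0 Rj, of a] by (simp add: E_def Ng_def A_def B_def)
      have rest: "(\<Sum>j\<in>{N - i<..N}. E F a j) \<le> D * Ng F a" using D(2) F by auto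
      have "(\<Sum>j'\<in>{j0<..N}. (1 / N) * E F a j') = (1 / N) * (\<Sum>j\<in>{N - i<..N}. E F a j)"
        by (simp add: j0_def sum_distrib_left)
      also have "\<dots> \<le> (1 / N) * (D * Ng F a)" using rest by (intro mult_left_mono) auto
      finally have "cf j0 * E F a j0 \<le> A * Ng F a + B * ((1 / N) * (D * Ng F a))"
        using li B0 by (meson add_left_mono mult_left_mono order_trans)
      then have "E F a j0 \<le> (A * Ng F a + B * ((1 / N) * (D * Ng F a))) / cf j0"
        using c0 by (simp add: field_simps)
      also have "\<dots> = ((A + B * (1 / N) * D) / cf j0) * Ng F a" by (simp add: field_simps)
      finally have e0: "E F a j0 \<le> ((A + B * (1 / N) * D) / cf j0) * Ng F a" .
      have "(\<Sum>j\<in>{N - Suc i<..N}. E F a j) = E F a j0 + (\<Sum>j\<in>{N - i<..N}. E F a j)"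
        unfolding set by (subst sum.insert) (auto simp: j0_def)
      also have "\<dots> \<le> ((A + B * (1 / N) * D) / cf j0) * Ng F a + D * Ng F a"
        using e0 rest by linarith
      also have "\<dots> = D' * Ng F a" by (simp add: D'_def algebra_simps)
      finally show "(\<Sum>j\<in>{N - Suc i<..N}. E F a j) \<le> D' * Ng F a" .
    qed
  qed
  from claim[of N] obtain D where D: "D \<ge> 0" "\<forall>F a. finite F \<longrightarrow> F \<subseteq> Lamb \<longrightarrow> (\<Sum>j\<in>{0<..N}. E F a j) \<le> D * Ng F a"
    by auto
  show ?thesis
  proof (intro exI[of _ "D + 1"] conjI allI impI)
    show "D + 1 > 0" using D by simp
    fix F a assume F: "finite F" "F \<subseteq> Lamb"
    have "(\<Sum>l\<in>F. (cmod (a l))\<^sup>2) = (\<Sum>j\<in>{1..N}. E F a j)"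
      unfolding E_def by (rule g_split[OF F])
    also have "{1..N} = {0<..N}" by auto
    also have "(\<Sum>j\<in>{0<..N}. E F a j) \<le> D * Ng F a" using D F by auto
    also have "\<dots> \<le> (D + 1) * Ng F a" using Ng0[of F a] by (simp add: algebra_simps)
    finally show "(\<Sum>l\<in>F. (cmod (a l))\<^sup>2) \<le> (D + 1) * L2_norm_sq S (\<lambda>t. \<Sum>l\<in>F. a l * expo l t)"
      by (simp add: Ng_def)
  qed
qed

end


context ctx
begin

definition solv :: "(real \<Rightarrow> complex) \<Rightarrow> real \<Rightarrow> nat \<Rightarrow> complex" where
  "solv r t j = sol (Jt t) (\<lambda>m. r (t + real m / real N)) j"

lemma solv_eq_sum:
  "solv r t j = (\<Sum>J\<in>Pow {0..<N}. indicator {t. Jt t = J} t *\<^sub>R sol J (\<lambda>m. r (t + real m / real N)) j)"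
proof -
  have "(\<Sum>J\<in>Pow {0..<N}. indicator {t. Jt t = J} t *\<^sub>R sol J (\<lambda>m. r (t + real m / real N)) j)
      = (\<Sum>J\<in>Pow {0..<N}. if J = Jt t then sol (Jt t) (\<lambda>m. r (t + real m / real N)) j else 0)"
    by (intro sum.cong) (auto simp: indicator_def)
  also have "\<dots> = sol (Jt t) (\<lambda>m. r (t + real m / real N)) j"
    using Jt_sub[of t] by simp
  finally show ?thesis by (simp add: solv_def)
qed

lemma solv_meas[measurable]:
  assumes [measurable]: "r \<in> borel_measurable lebesgue"
  shows "(\<lambda>t. solv r t j) \<in> borel_measurable lebesgue"
proof -
  have tr[measurable]: "(\<lambda>t. r (t + c)) \<in> borel_measurable lebesgue" for c
    by (rule meas_transl) simp
  have "(\<lambda>t. \<Sum>J\<in>Pow {0..<N}. indicator {t. Jt t = J} t *\<^sub>R sol J (\<lambda>m. r (t + real m / real N)) j) \<in> borel_measurable lebesgue"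
    unfolding sol_def by measurable
  then show ?thesis by (simp add: solv_eq_sum)
qed

lemma solv_diff: "solv (\<lambda>x. r x - q x) t j = solv r t j - solv q t j"
  unfolding solv_def sol_def by (simp add: algebra_simps sum_subtractf)

lemma solv_lay:
  assumes n: "n \<in> {1..N}" and F: "F \<subseteq> lay n"
  shows "solv (\<lambda>x. \<Sum>l\<in>F. a l * expo l x) t j = (\<Sum>l\<in>F. a l * expo l t) * sol (Jt t) (\<lambda>m. z m ^ n) j"
proof -
  have eq: "(\<lambda>m. \<Sum>l\<in>F. a l * expo l (t + real m / real N)) = (\<lambda>m. (\<Sum>l\<in>F. a l * expo l t) * z m ^ n)"
  proof (rule ext)
    fix m
    have "(\<Sum>l\<in>F. a l * expo l (t + real m / real N)) = (\<Sum>l\<in>F. (a l * expo l t) * z m ^ n)"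
      using expo_lay[OF n] F by (intro sum.cong) (auto simp: mult_ac)
    also have "\<dots> = (\<Sum>l\<in>F. a l * expo l t) * z m ^ n" by (rule sum_distrib_right[symmetric])
    finally show "(\<Sum>l\<in>F. a l * expo l (t + real m / real N)) = (\<Sum>l\<in>F. a l * expo l t) * z m ^ n" .
  qed
  show ?thesis unfolding solv_def eq unfolding sol_def by (simp add: sum_distrib_left) (intro sum.cong refl, simp add: sum_distrib_left sum_distrib_right mult_ac)
qed

lemma solv_sq_bound:
  assumes j: "j \<in> {1..N}"
  shows "(cmod (solv r t j))\<^sup>2 \<le> Kb\<^sup>2 * N * (\<Sum>m<N. indicator S (t + real m / real N) * (cmod (r (t + real m / real N)))\<^sup>2)"
  using sol_bound[OF Jt_sub j, of t "\<lambda>m. r (t + real m / real N)"] unfolding solv_def sum_Jt .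

definition good :: "(real \<Rightarrow> complex) \<Rightarrow> bool" where
  "good r \<longleftrightarrow> r \<in> borel_measurable lebesgue \<and> (\<integral>\<^sup>+x. ennreal (indicator S x * (cmod (r x))\<^sup>2) \<partial>lebesgue) < \<infinity>"

lemma solv_nn_bound:
  assumes r[measurable]: "r \<in> borel_measurable lebesgue" and j: "j \<in> {1..N}"
  shows "(\<integral>\<^sup>+t. ennreal (indicator (A_ge N S j) t * (cmod (solv r t j))\<^sup>2) \<partial>lebesgue)
     \<le> ennreal (Kb\<^sup>2 * N) * (N * (\<integral>\<^sup>+x. ennreal (indicator S x * (cmod (r x))\<^sup>2) \<partial>lebesgue))"
proof -
  have "(\<integral>\<^sup>+t. ennreal (indicator (A_ge N S j) t * (cmod (solv r t j))\<^sup>2) \<partial>lebesgue)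
      \<le> (\<integral>\<^sup>+t. ennreal (Kb\<^sup>2 * N) * ennreal (indicator {0..1/N} t * (\<Sum>m<N. indicator S (t + m/N) * (cmod (r (t + m/N)))\<^sup>2)) \<partial>lebesgue)"
  proof (intro nn_integral_mono)
    fix t
    have "indicator (A_ge N S j) t * (cmod (solv r t j))\<^sup>2 \<le> (Kb\<^sup>2 * N) * (indicator {0..1/N} t * (\<Sum>m<N. indicator S (t + m/N) * (cmod (r (t + m/N)))\<^sup>2))"
    proof (cases "t \<in> A_ge N S j")
      case True
      then have "t \<in> {0..1/N}" using A_ge_sub[of j] by blast
      then show ?thesis using True solv_sq_bound[OF j, of r t] by (simp add: mult_ac)
    next
      case False
      have "0 \<le> (Kb\<^sup>2 * N) * (indicator {0..1/N} t * (\<Sum>m<N. indicator S (t + m/N) * (cmod (r (t + m/N)))\<^sup>2))"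
        by (intro mult_nonneg_nonneg sum_nonneg) auto
      then show ?thesis using False by simp
    qed
    then show "ennreal (indicator (A_ge N S j) t * (cmod (solv r t j))\<^sup>2) \<le> ennreal (Kb\<^sup>2 * N) * ennreal (indicator {0..1/N} t * (\<Sum>m<N. indicator S (t + m/N) * (cmod (r (t + m/N)))\<^sup>2))"
      by (simp add: ennreal_mult'[symmetric] ennreal_leI)
  qed
  also have "\<dots> = ennreal (Kb\<^sup>2 * N) * (\<integral>\<^sup>+t. ennreal (indicator {0..1/N} t * (\<Sum>m<N. indicator S (t + m/N) * (cmod (r (t + m/N)))\<^sup>2)) \<partial>lebesgue)"
  proof (rule nn_integral_cmult)
    have "(\<lambda>t. indicator S (t + c) * (cmod (r (t + c)))\<^sup>2) \<in> borel_measurable lebesgue" for c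
      by (rule meas_transl[where f="\<lambda>x. indicator S x * (cmod (r x))\<^sup>2"]) measurable
    then show "(\<lambda>t. ennreal (indicator {0..1/N} t * (\<Sum>m<N. indicator S (t + m/N) * (cmod (r (t + m/N)))\<^sup>2))) \<in> borel_measurable lebesgue"
      by measurable
  qed
  also have "\<dots> \<le> ennreal (Kb\<^sup>2 * N) * (N * (\<integral>\<^sup>+x. ennreal (indicator S x * (cmod (r x))\<^sup>2) \<partial>lebesgue))"
    by (intro mult_left_mono fib_ge[OF N Smeas]) auto
  finally show ?thesis .
qed

lemma recon:
  assumes t: "t \<in> {0..1/N}"
  shows "(\<Sum>m<N. indicator S (t + m/N) * (cmod (r (t + m/N)))\<^sup>2) \<le> N * N * (\<Sum>j\<in>{1..N}. indicator (A_ge N S j) t * (cmod (solv r t j))\<^sup>2)"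
proof -
  define J where "J = Jt t"
  define k where "k = card J"
  have J: "J \<subseteq> {0..<N}" using Jt_sub by (simp add: J_def)
  have kN: "k \<le> N" using Jt_card by (simp add: k_def J_def)
  have w: "r (t + real m / real N) = (\<Sum>j\<in>{1..k}. z m ^ j * solv r t j)" if "m \<in> J" for m
    unfolding solv_def J_def[symmetric] k_def using sol_right[OF J that, of "\<lambda>m. r (t + real m / real N)"] by simp
  have "(\<Sum>m<N. indicator S (t + m/N) * (cmod (r (t + m/N)))\<^sup>2) = (\<Sum>m\<in>J. (cmod (r (t + real m / real N)))\<^sup>2)"
    unfolding J_def sum_Jt by simp
  also have "\<dots> \<le> (\<Sum>m\<in>J. N * (\<Sum>j\<in>{1..k}. (cmod (solv r t j))\<^sup>2))"
  proof (intro sum_mono)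
    fix m assume m: "m \<in> J"
    have "cmod (r (t + real m / real N)) \<le> (\<Sum>j\<in>{1..k}. cmod (solv r t j))"
      unfolding w[OF m] by (rule order.trans[OF norm_sum]) (simp add: norm_mult z_def norm_power)
    then have "(cmod (r (t + real m / real N)))\<^sup>2 \<le> (\<Sum>j\<in>{1..k}. cmod (solv r t j))\<^sup>2"
      by (intro power_mono) auto
    also have "\<dots> \<le> card {1..k} * (\<Sum>j\<in>{1..k}. (cmod (solv r t j))\<^sup>2)" by (rule sq_sum_le)
    also have "\<dots> \<le> N * (\<Sum>j\<in>{1..k}. (cmod (solv r t j))\<^sup>2)"
      using kN by (intro mult_right_mono sum_nonneg) auto
    finally show "(cmod (r (t + real m / real N)))\<^sup>2 \<le> N * (\<Sum>j\<in>{1..k}. (cmod (solv r t j))\<^sup>2)" .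
  qed
  also have "\<dots> = card J * (N * (\<Sum>j\<in>{1..k}. (cmod (solv r t j))\<^sup>2))" by simp
  also have "\<dots> \<le> N * (N * (\<Sum>j\<in>{1..k}. (cmod (solv r t j))\<^sup>2))"
  proof -
    have "0 \<le> N * (\<Sum>j\<in>{1..k}. (cmod (solv r t j))\<^sup>2)" by (intro mult_nonneg_nonneg sum_nonneg) auto
    then show ?thesis using kN by (intro mult_right_mono) (auto simp: k_def)
  qed
  also have "(\<Sum>j\<in>{1..k}. (cmod (solv r t j))\<^sup>2) = (\<Sum>j\<in>{1..N}. indicator (A_ge N S j) t * (cmod (solv r t j))\<^sup>2)"
  proof -
    have "(\<Sum>j\<in>{1..N}. indicator (A_ge N S j) t * (cmod (solv r t j))\<^sup>2) = (\<Sum>j\<in>{1..N}. if j \<in> {1..k} then (cmod (solv r t j))\<^sup>2 else 0)"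
      using t by (intro sum.cong) (auto simp: indicator_def A_ge_iff k_def J_def)
    also have "\<dots> = (\<Sum>j\<in>{1..k}. (cmod (solv r t j))\<^sup>2)"
      using kN by (subst sum.If_cases) (auto intro!: sum.cong simp: Int_absorb1)
    finally show ?thesis by simp
  qed
  finally show ?thesis by (simp add: mult_ac)
qed

end


lemma nn_sub_fin:
  fixes r :: "real \<Rightarrow> complex"
  assumes A[measurable]: "A \<in> sets lebesgue" "A \<subseteq> {a0..b0}" and r[measurable]: "r \<in> borel_measurable lebesgue"
    and fin: "(\<integral>\<^sup>+x. ennreal (indicator A x * (cmod (r x))\<^sup>2) \<partial>lebesgue) < \<infinity>"
  shows "(\<integral>\<^sup>+x. ennreal (indicator A x * (cmod (r x - (\<Sum>l\<in>F. a l * expo l x)))\<^sup>2) \<partial>lebesgue) < \<infinity>"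
proof -
  define M where "M = (\<Sum>l\<in>F. cmod (a l))"
  have "(\<integral>\<^sup>+x. ennreal (indicator A x * (cmod (r x - (\<Sum>l\<in>F. a l * expo l x)))\<^sup>2) \<partial>lebesgue)
     \<le> (\<integral>\<^sup>+x. 2 * ennreal (indicator A x * (cmod (r x))\<^sup>2) + ennreal (2 * M\<^sup>2) * indicator A x \<partial>lebesgue)"
  proof (intro nn_integral_mono)
    fix x
    have "indicator A x * (cmod (r x - (\<Sum>l\<in>F. a l * expo l x)))\<^sup>2 \<le> 2 * (indicator A x * (cmod (r x))\<^sup>2) + (2 * M\<^sup>2) * indicator A x"
    proof (cases "x \<in> A")
      case True
      have "(cmod (r x - (\<Sum>l\<in>F. a l * expo l x)))\<^sup>2 \<le> 2 * (cmod (r x))\<^sup>2 + 2 * (cmod (\<Sum>l\<in>F. a l * expo l x))\<^sup>2"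
        by (rule sq_diff_le)
      also have "\<dots> \<le> 2 * (cmod (r x))\<^sup>2 + 2 * M\<^sup>2"
        using es_sq_bound[where a=a and F=F and t=x] by (simp add: M_def)
      finally show ?thesis using True by simp
    qed simp
    then have le: "ennreal (indicator A x * (cmod (r x - (\<Sum>l\<in>F. a l * expo l x)))\<^sup>2) \<le> ennreal (2 * (indicator A x * (cmod (r x))\<^sup>2) + (2 * M\<^sup>2) * indicator A x)"
      by (rule ennreal_leI)
    have eq: "ennreal (2 * (indicator A x * (cmod (r x))\<^sup>2) + (2 * M\<^sup>2) * indicator A x) = 2 * ennreal (indicator A x * (cmod (r x))\<^sup>2) + ennreal (2 * M\<^sup>2) * indicator A x"
      by (cases "x \<in> A") (simp_all add: ennreal_plus ennreal_mult)
    show "ennreal (indicator A x * (cmod (r x - (\<Sum>l\<in>F. a l * expo l x)))\<^sup>2) \<le> 2 * ennreal (indicator A x * (cmod (r x))\<^sup>2) + ennreal (2 * M\<^sup>2) * indicator A x"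
      using le eq by simp
  qed
  also have "\<dots> = 2 * (\<integral>\<^sup>+x. ennreal (indicator A x * (cmod (r x))\<^sup>2) \<partial>lebesgue) + ennreal (2 * M\<^sup>2) * emeasure lebesgue A"
    by (subst nn_integral_add) (auto simp: nn_integral_cmult nn_integral_cmult_indicator)
  also have "\<dots> < \<infinity>"
  proof -
    have "emeasure lebesgue A \<le> emeasure lebesgue {a0..b0}" using A by (intro emeasure_mono) auto
    also have "\<dots> < \<infinity>" using emeasure_lborel_cbox_finite[of a0 b0] by simp
    finally have "emeasure lebesgue A < \<infinity>" .
    then show ?thesis using fin by (simp add: ennreal_mult_less_top)
  qed
  finally show ?thesis .
qed

lemma nn_to_L2:
  fixes h :: "real \<Rightarrow> complex"
  assumes [measurable]: "A \<in> sets lebesgue" "h \<in> borel_measurable lebesgue"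
    and fin: "(\<integral>\<^sup>+x. ennreal (indicator A x * (cmod (h x))\<^sup>2) \<partial>lebesgue) < \<infinity>"
  shows "(\<integral>\<^sup>+x. ennreal (indicator A x * (cmod (h x))\<^sup>2) \<partial>lebesgue) = ennreal (L2_norm_sq A h)"
    and "integrable lebesgue (\<lambda>x. indicator A x * (cmod (h x))\<^sup>2)"
proof -
  show int: "integrable lebesgue (\<lambda>x. indicator A x * (cmod (h x))\<^sup>2)"
    by (rule integrableI_nonneg) (use fin in auto)
  show "(\<integral>\<^sup>+x. ennreal (indicator A x * (cmod (h x))\<^sup>2) \<partial>lebesgue) = ennreal (L2_norm_sq A h)"
    unfolding L2_norm_sq_def by (rule nn_integral_eq_integral[OF int]) auto
qed

context ctx
begin

definition Err :: "nat \<Rightarrow> (real \<Rightarrow> complex) \<Rightarrow> ennreal" where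
  "Err n r = (\<Sum>j\<in>{1..n}. \<integral>\<^sup>+t. ennreal (indicator (A_ge N S j) t * (cmod (solv r t j))\<^sup>2) \<partial>lebesgue)"

lemma good_sub:
  assumes "good r"
  shows "good (\<lambda>t. r t - (\<Sum>l\<in>F. a l * expo l t))"
  using assms nn_sub_fin[OF Smeas S01, where r=r and F=F and a=a] by (auto simp: good_def)

lemma approx_layers:
  fixes \<delta> :: real
  assumes C: "\<forall>n\<in>{1..N}. \<forall>f. in_L2 (A_ge N S n) f \<longrightarrow> (\<forall>\<epsilon>>0. \<exists>F a. finite F \<and> F \<subseteq> Lam n \<and>
          L2_norm_sq (A_ge N S n) (\<lambda>t. f t - (\<Sum>lam\<in>F. a lam * expo lam t)) < \<epsilon>)"
    and d: "\<delta> > 0"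
  shows "n \<le> N \<Longrightarrow> good r \<Longrightarrow> \<exists>F a. finite F \<and> F \<subseteq> (\<Union>j\<in>{1..n}. lay j)
     \<and> Err n (\<lambda>t. r t - (\<Sum>l\<in>F. a l * expo l t)) \<le> ennreal (real n * \<delta>)
     \<and> (\<forall>t j. n < j \<longrightarrow> j \<le> card (Jt t) \<longrightarrow> solv (\<lambda>t. r t - (\<Sum>l\<in>F. a l * expo l t)) t j = solv r t j)"
proof (induction n arbitrary: r)
  case 0
  show ?case by (intro exI[of _ "{}"]) (auto simp: Err_def)
next
  case (Suc n)
  define n1 where "n1 = Suc n"
  have n1: "n1 \<in> {1..N}" using Suc.prems by (simp add: n1_def)
  have r[measurable]: "r \<in> borel_measurable lebesgue" and rfin: "(\<integral>\<^sup>+x. ennreal (indicator S x * (cmod (r x))\<^sup>2) \<partial>lebesgue) < \<infinity>"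
    using Suc.prems by (auto simp: good_def)
  define T where "T t = expo (- real n1) t * solv r t n1" for t
  have Tm[measurable]: "T \<in> borel_measurable lebesgue" unfolding T_def[abs_def] by measurable
  have Tsq: "(cmod (T t))\<^sup>2 = (cmod (solv r t n1))\<^sup>2" for t by (simp add: T_def norm_mult)
  have Tfin: "(\<integral>\<^sup>+t. ennreal (indicator (A_ge N S n1) t * (cmod (T t))\<^sup>2) \<partial>lebesgue) < \<infinity>"
  proof -
    have "(\<integral>\<^sup>+t. ennreal (indicator (A_ge N S n1) t * (cmod (T t))\<^sup>2) \<partial>lebesgue)
        \<le> ennreal (Kb\<^sup>2 * N) * (N * (\<integral>\<^sup>+x. ennreal (indicator S x * (cmod (r x))\<^sup>2) \<partial>lebesgue))"
      unfolding Tsq by (rule solv_nn_bound[OF r n1])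
    also have "\<dots> < \<infinity>" using rfin by (simp add: ennreal_mult_less_top of_nat_less_top)
    finally show ?thesis .
  qed
  have inL2: "in_L2 (A_ge N S n1) T"
    unfolding in_L2_def
  proof (intro conjI)
    show "(\<lambda>t. indicator (A_ge N S n1) t *\<^sub>R T t) \<in> borel_measurable lebesgue" by measurable
    show "integrable lebesgue (\<lambda>t. indicator (A_ge N S n1) t * (cmod (T t))\<^sup>2)"
      by (rule nn_to_L2(2)[OF sets_A_ge Tm Tfin])
  qed
  have Cn: "\<forall>f. in_L2 (A_ge N S n1) f \<longrightarrow> (\<forall>\<epsilon>>0. \<exists>F a. finite F \<and> F \<subseteq> Lam n1 \<and>
          L2_norm_sq (A_ge N S n1) (\<lambda>t. f t - (\<Sum>lam\<in>F. a lam * expo lam t)) < \<epsilon>)"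
    using bspec[OF C n1] .
  obtain Fn b where Fn: "finite Fn" "Fn \<subseteq> Lam n1"
    and appr: "L2_norm_sq (A_ge N S n1) (\<lambda>t. T t - (\<Sum>l\<in>Fn. b l * expo l t)) < \<delta>"
    using Cn[rule_format, OF inL2 d] by blast
  have appr_nn: "(\<integral>\<^sup>+t. ennreal (indicator (A_ge N S n1) t * (cmod (T t - (\<Sum>l\<in>Fn. b l * expo l t)))\<^sup>2) \<partial>lebesgue) \<le> ennreal \<delta>"
  proof -
    have fin: "(\<integral>\<^sup>+t. ennreal (indicator (A_ge N S n1) t * (cmod (T t - (\<Sum>l\<in>Fn. b l * expo l t)))\<^sup>2) \<partial>lebesgue) < \<infinity>"
      using A_ge_sub[of n1] by (intro nn_sub_fin[OF sets_A_ge _ Tm Tfin]) auto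
    show ?thesis using nn_to_L2(1)[OF sets_A_ge _ fin] appr by (simp add: ennreal_leI)
  qed
  define F1 where "F1 = (\<lambda>x. x + real n1) ` Fn"
  define a1 where "a1 l = b (l - real n1)" for l
  have F1lay: "F1 \<subseteq> lay n1" using Fn by (auto simp: F1_def lay_def)
  have F1fin: "finite F1" using Fn by (simp add: F1_def)
  have g1: "(\<Sum>l\<in>F1. a1 l * expo l t) = expo (real n1) t * (\<Sum>l\<in>Fn. b l * expo l t)" for t
  proof -
    have "(\<Sum>l\<in>F1. a1 l * expo l t) = (\<Sum>l\<in>Fn. a1 (l + real n1) * expo (l + real n1) t)"
      unfolding F1_def by (subst sum.reindex) (auto simp: inj_on_def)
    also have "\<dots> = expo (real n1) t * (\<Sum>l\<in>Fn. b l * expo l t)"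
      by (simp add: a1_def expo_add_freq sum_distrib_left mult_ac)
    finally show ?thesis .
  qed
  define r' where "r' t = r t - (\<Sum>l\<in>F1. a1 l * expo l t)" for t
  have gr': "good r'" unfolding r'_def[abs_def] by (rule good_sub[OF Suc.prems(2)])
  obtain F2 a2 where F2: "finite F2" "F2 \<subseteq> (\<Union>j\<in>{1..n}. lay j)"
    and E2: "Err n (\<lambda>t. r' t - (\<Sum>l\<in>F2. a2 l * expo l t)) \<le> ennreal (n * \<delta>)"
    and P2: "\<forall>t j. n < j \<longrightarrow> j \<le> card (Jt t) \<longrightarrow> solv (\<lambda>t. r' t - (\<Sum>l\<in>F2. a2 l * expo l t)) t j = solv r' t j"
    using Suc.IH[OF _ gr'] Suc.prems(1) by auto
  have disj: "F1 \<inter> F2 = {}"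
  proof -
    have "lay n1 \<inter> lay j = {}" if "j \<in> {1..n}" for j
      using that n1 lay_disj[of n1 j] by (auto simp: n1_def)
    then show ?thesis using F1lay F2(2) by blast
  qed
  define F where "F = F1 \<union> F2"
  define a where "a l = (if l \<in> F1 then a1 l else a2 l)" for l
  have gsplit: "(\<Sum>l\<in>F. a l * expo l t) = (\<Sum>l\<in>F1. a1 l * expo l t) + (\<Sum>l\<in>F2. a2 l * expo l t)" for t
  proof -
    have "(\<Sum>l\<in>F. a l * expo l t) = (\<Sum>l\<in>F1. a l * expo l t) + (\<Sum>l\<in>F2. a l * expo l t)"
      unfolding F_def by (rule sum.union_disjoint) (use F1fin F2(1) disj in auto)
    moreover have "(\<Sum>l\<in>F1. a l * expo l t) = (\<Sum>l\<in>F1. a1 l * expo l t)" by (simp add: a_def)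
    moreover have "(\<Sum>l\<in>F2. a l * expo l t) = (\<Sum>l\<in>F2. a2 l * expo l t)"
      using disj by (intro sum.cong) (auto simp: a_def)
    ultimately show ?thesis by simp
  qed
  define \<rho> where "\<rho> t = r t - (\<Sum>l\<in>F. a l * expo l t)" for t
  have \<rho>eq: "\<rho> = (\<lambda>t. r' t - (\<Sum>l\<in>F2. a2 l * expo l t))"
    by (rule ext) (simp add: \<rho>_def r'_def gsplit)
  have solv_r': "solv r' t j = solv r t j - expo (real n1) t * (\<Sum>l\<in>Fn. b l * expo l t) * sol (Jt t) (\<lambda>m. z m ^ n1) j" for t j
  proof -
    have "solv r' t j = solv r t j - solv (\<lambda>x. \<Sum>l\<in>F1. a1 l * expo l x) t j"
      unfolding r'_def[abs_def] by (rule solv_diff)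
    also have "solv (\<lambda>x. \<Sum>l\<in>F1. a1 l * expo l x) t j = (\<Sum>l\<in>F1. a1 l * expo l t) * sol (Jt t) (\<lambda>m. z m ^ n1) j"
      by (rule solv_lay[OF n1 F1lay])
    finally show ?thesis by (simp add: g1)
  qed
  have key: "solv \<rho> t n1 = expo (real n1) t * (T t - (\<Sum>l\<in>Fn. b l * expo l t))" if t: "t \<in> A_ge N S n1" for t
  proof -
    have k: "n1 \<le> card (Jt t)" using t by (simp add: A_ge_iff)
    have "solv \<rho> t n1 = solv r' t n1" unfolding \<rho>eq using P2 k by (auto simp: n1_def)
    also have "\<dots> = solv r t n1 - expo (real n1) t * (\<Sum>l\<in>Fn. b l * expo l t)"
      using sol_left[OF Jt_sub, of n1 t n1] k n1 by (simp add: solv_r')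
    also have "solv r t n1 = expo (real n1) t * T t"
      by (simp add: T_def expo_add_freq[symmetric])
    finally show ?thesis by (simp add: algebra_simps)
  qed
  have trm: "(\<integral>\<^sup>+t. ennreal (indicator (A_ge N S n1) t * (cmod (solv \<rho> t n1))\<^sup>2) \<partial>lebesgue) \<le> ennreal \<delta>"
  proof -
    have "(\<integral>\<^sup>+t. ennreal (indicator (A_ge N S n1) t * (cmod (solv \<rho> t n1))\<^sup>2) \<partial>lebesgue)
        = (\<integral>\<^sup>+t. ennreal (indicator (A_ge N S n1) t * (cmod (T t - (\<Sum>l\<in>Fn. b l * expo l t)))\<^sup>2) \<partial>lebesgue)"
      by (intro nn_integral_cong) (auto simp: indicator_def key norm_mult)
    then show ?thesis using appr_nn by simp
  qed
  have "Err n1 \<rho> = Err n \<rho> + (\<integral>\<^sup>+t. ennreal (indicator (A_ge N S n1) t * (cmod (solv \<rho> t n1))\<^sup>2) \<partial>lebesgue)"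
    by (simp add: Err_def n1_def add.commute)
  also have "\<dots> \<le> ennreal (n * \<delta>) + ennreal \<delta>"
    using E2 trm unfolding \<rho>eq by (intro add_mono) auto
  also have "\<dots> = ennreal (real n * \<delta> + \<delta>)" using d by (intro ennreal_plus[symmetric]) auto
  also have "ennreal (real n * \<delta> + \<delta>) = ennreal (n1 * \<delta>)" by (simp add: n1_def algebra_simps)
  finally have Err: "Err n1 \<rho> \<le> ennreal (n1 * \<delta>)" .
  have propj: "solv \<rho> t j = solv r t j" if "n1 < j" "j \<le> card (Jt t)" for t j
  proof -
    have "solv \<rho> t j = solv r' t j" unfolding \<rho>eq using P2 that by (auto simp: n1_def)
    also have "\<dots> = solv r t j"
      using sol_left[OF Jt_sub, of j t n1] that n1 by (simp add: solv_r')
    finally show ?thesis .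
  qed
  show ?case
  proof (intro exI[of _ F] exI[of _ a] conjI allI impI)
    show "finite F" using F1fin F2(1) by (simp add: F_def)
    have u1: "lay n1 \<subseteq> (\<Union>j\<in>{1..Suc n}. lay j)" by (intro UN_upper) (simp add: n1_def)
    have u2: "(\<Union>j\<in>{1..n}. lay j) \<subseteq> (\<Union>j\<in>{1..Suc n}. lay j)" by (intro UN_mono) auto
    show "F \<subseteq> (\<Union>j\<in>{1..Suc n}. lay j)" using F1lay F2(2) u1 u2 unfolding F_def by blast
    show "Err (Suc n) (\<lambda>t. r t - (\<Sum>l\<in>F. a l * expo l t)) \<le> ennreal (real (Suc n) * \<delta>)"
      using Err by (simp add: \<rho>_def[abs_def] n1_def)
    fix t j assume "Suc n < j" "j \<le> card (Jt t)"
    then show "solv (\<lambda>t. r t - (\<Sum>l\<in>F. a l * expo l t)) t j = solv r t j"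
      using propj by (simp add: \<rho>_def[abs_def] n1_def)
  qed
qed

end


context ctx
begin

lemma complete:
  assumes C: "\<forall>n\<in>{1..N}. \<forall>f. in_L2 (A_ge N S n) f \<longrightarrow> (\<forall>\<epsilon>>0. \<exists>F a. finite F \<and> F \<subseteq> Lam n \<and>
          L2_norm_sq (A_ge N S n) (\<lambda>t. f t - (\<Sum>lam\<in>F. a lam * expo lam t)) < \<epsilon>)"
    and f: "in_L2 S f" and e: "\<epsilon> > 0"
  shows "\<exists>F a. finite F \<and> F \<subseteq> Lamb \<and> L2_norm_sq S (\<lambda>t. f t - (\<Sum>l\<in>F. a l * expo l t)) < \<epsilon>"
proof -
  define f' where "f' t = indicator S t *\<^sub>R f t" for t
  have f'm[measurable]: "f' \<in> borel_measurable lebesgue" using f by (simp add: in_L2_def f'_def[abs_def])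
  have sq: "indicator S x * (cmod (f' x))\<^sup>2 = indicator S x * (cmod (f x))\<^sup>2" for x
    by (simp add: f'_def indicator_def)
  have intf: "integrable lebesgue (\<lambda>x. indicator S x * (cmod (f x))\<^sup>2)" using f by (simp add: in_L2_def)
  have "(\<integral>\<^sup>+x. ennreal (indicator S x * (cmod (f' x))\<^sup>2) \<partial>lebesgue) = (\<integral>\<^sup>+x. ennreal (indicator S x * (cmod (f x))\<^sup>2) \<partial>lebesgue)"
    by (simp only: sq)
  also have "\<dots> = ennreal (LINT x|lebesgue. indicator S x * (cmod (f x))\<^sup>2)"
    by (rule nn_integral_eq_integral[OF intf]) auto
  finally have gf: "good f'" by (simp add: good_def)
  define \<delta> where "\<delta> = \<epsilon> / (real N ^ 3 + 1)"
  have p3: "0 < real N ^ 3 + 1" using zero_le_power[of "real N" 3] by linarith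
  have d: "\<delta> > 0" unfolding \<delta>_def using e p3 by (intro divide_pos_pos) auto
  obtain F a where F: "finite F" "F \<subseteq> (\<Union>j\<in>{1..N}. lay j)"
    and E: "Err N (\<lambda>t. f' t - (\<Sum>l\<in>F. a l * expo l t)) \<le> ennreal (real N * \<delta>)"
    using approx_layers[OF C d, of N f'] gf by auto
  define \<rho> where "\<rho> t = f' t - (\<Sum>l\<in>F. a l * expo l t)" for t
  have \<rho>m[measurable]: "\<rho> \<in> borel_measurable lebesgue" unfolding \<rho>_def[abs_def] by measurable
  have sm[measurable]: "(\<lambda>t. indicator (A_ge N S j) t * (cmod (solv \<rho> t j))\<^sup>2) \<in> borel_measurable lebesgue" for j
    by measurable
  have "(\<integral>\<^sup>+x. ennreal (indicator S x * (cmod (\<rho> x))\<^sup>2) \<partial>lebesgue)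
      \<le> (\<integral>\<^sup>+t. ennreal (indicator {0..1/N} t * (\<Sum>m<N. indicator S (t + m/N) * (cmod (\<rho> (t + m/N)))\<^sup>2)) \<partial>lebesgue)"
    by (rule fib_le[OF N Smeas S01]) auto
  also have "\<dots> \<le> (\<integral>\<^sup>+t. ennreal (N * N) * ennreal (\<Sum>j\<in>{1..N}. indicator (A_ge N S j) t * (cmod (solv \<rho> t j))\<^sup>2) \<partial>lebesgue)"
  proof (intro nn_integral_mono)
    fix t
    have "indicator {0..1/N} t * (\<Sum>m<N. indicator S (t + m/N) * (cmod (\<rho> (t + m/N)))\<^sup>2)
        \<le> (N * N) * (\<Sum>j\<in>{1..N}. indicator (A_ge N S j) t * (cmod (solv \<rho> t j))\<^sup>2)"
    proof (cases "t \<in> {0..1/N}")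
      case True
      then show ?thesis using recon[OF True, of \<rho>] by simp
    next
      case False
      have "0 \<le> (N * N) * (\<Sum>j\<in>{1..N}. indicator (A_ge N S j) t * (cmod (solv \<rho> t j))\<^sup>2)"
        by (intro mult_nonneg_nonneg sum_nonneg) auto
      then show ?thesis using False by simp
    qed
    then show "ennreal (indicator {0..1/N} t * (\<Sum>m<N. indicator S (t + m/N) * (cmod (\<rho> (t + m/N)))\<^sup>2))
        \<le> ennreal (N * N) * ennreal (\<Sum>j\<in>{1..N}. indicator (A_ge N S j) t * (cmod (solv \<rho> t j))\<^sup>2)"
      by (simp add: ennreal_mult'[symmetric] ennreal_leI)
  qed
  also have "\<dots> = ennreal (N * N) * (\<integral>\<^sup>+t. ennreal (\<Sum>j\<in>{1..N}. indicator (A_ge N S j) t * (cmod (solv \<rho> t j))\<^sup>2) \<partial>lebesgue)"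
    by (rule nn_integral_cmult) measurable
  also have "(\<integral>\<^sup>+t. ennreal (\<Sum>j\<in>{1..N}. indicator (A_ge N S j) t * (cmod (solv \<rho> t j))\<^sup>2) \<partial>lebesgue) = Err N \<rho>"
  proof -
    have "(\<integral>\<^sup>+t. ennreal (\<Sum>j\<in>{1..N}. indicator (A_ge N S j) t * (cmod (solv \<rho> t j))\<^sup>2) \<partial>lebesgue)
        = (\<integral>\<^sup>+t. (\<Sum>j\<in>{1..N}. ennreal (indicator (A_ge N S j) t * (cmod (solv \<rho> t j))\<^sup>2)) \<partial>lebesgue)"
      by (intro nn_integral_cong) (subst sum_ennreal, auto)
    also have "\<dots> = Err N \<rho>" unfolding Err_def by (rule nn_integral_sum) measurable
    finally show ?thesis .
  qed
  also have "ennreal (N * N) * Err N \<rho> \<le> ennreal (N * N) * ennreal (real N * \<delta>)"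
    using E by (intro mult_left_mono) (auto simp: \<rho>_def[abs_def])
  also have "\<dots> = ennreal (real N ^ 3 * \<delta>)"
    using d by (simp add: ennreal_mult[symmetric] power3_eq_cube mult_ac)
  finally have nnb: "(\<integral>\<^sup>+x. ennreal (indicator S x * (cmod (\<rho> x))\<^sup>2) \<partial>lebesgue) \<le> ennreal (real N ^ 3 * \<delta>)" .
  have "L2_norm_sq S (\<lambda>t. f t - (\<Sum>l\<in>F. a l * expo l t)) = L2_norm_sq S \<rho>"
    unfolding L2_norm_sq_def by (intro Bochner_Integration.integral_cong) (auto simp: \<rho>_def f'_def indicator_def)
  also have "\<dots> = enn2real (\<integral>\<^sup>+x. ennreal (indicator S x * (cmod (\<rho> x))\<^sup>2) \<partial>lebesgue)"
    unfolding L2_norm_sq_def by (rule integral_eq_nn_integral) auto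
  also have "\<dots> \<le> real N ^ 3 * \<delta>"
    using enn2real_mono[OF nnb] d by simp
  also have "\<dots> < \<epsilon>"
  proof -
    have "real N ^ 3 * \<delta> = \<epsilon> * (real N ^ 3 / (real N ^ 3 + 1))" by (simp add: \<delta>_def)
    also have "\<dots> < \<epsilon> * 1"
    proof (rule mult_strict_left_mono[OF _ e])
      show "real N ^ 3 / (real N ^ 3 + 1) < 1" using p3 by (subst divide_less_eq_1_pos) auto
    qed
    finally show ?thesis by simp
  qed
  finally show ?thesis using F by (auto simp: Lamb_def)
qed

lemma upper:
  assumes F: "finite F" "F \<subseteq> Lamb"
  shows "L2_norm_sq S (\<lambda>t. \<Sum>l\<in>F. a l * expo l t) \<le> 1 * (\<Sum>l\<in>F. (cmod (a l))\<^sup>2)"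
proof -
  define M where "M = (\<Sum>l\<in>F. cmod (a l))"
  have b: "(cmod (\<Sum>l\<in>F. a l * expo l t))\<^sup>2 \<le> M\<^sup>2" for t using es_sq_bound[where a=a and F=F and t=t] by (simp add: M_def)
  have i1: "integrable lebesgue (\<lambda>t. indicator S t * (cmod (\<Sum>l\<in>F. a l * expo l t))\<^sup>2)"
    using S01 b by (intro integrable_bdd[where a=0 and b=1 and B="M\<^sup>2"]) auto
  have i2: "integrable lebesgue (\<lambda>t. indicator {0..1} t * (cmod (\<Sum>l\<in>F. a l * expo l t))\<^sup>2)"
    using b by (intro integrable_bdd[where a=0 and b=1 and B="M\<^sup>2"]) auto
  have "L2_norm_sq S (\<lambda>t. \<Sum>l\<in>F. a l * expo l t) \<le> (LINT t|lebesgue. indicator {0..1} t * (cmod (\<Sum>l\<in>F. a l * expo l t))\<^sup>2)"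
    unfolding L2_norm_sq_def using S01
    by (intro integral_mono[OF i1 i2]) (auto simp: indicator_def)
  also have "\<dots> = 1 * (\<Sum>l\<in>F. (cmod (a l))\<^sup>2)"
    using F Lamb_sep by (intro parseval_leb) auto
  finally show ?thesis .
qed

end

theorem mainTheorem2:
  fixes N :: nat and S :: "real set" and Lam :: "nat \<Rightarrow> real set"
  assumes "N > 0"
    and "S \<in> sets lebesgue" and "S \<subseteq> {0..1}"
    and "\<forall>n\<in>{1..N}. Lam n \<subseteq> {real_of_int (int N * k) | k. True}"
    and "\<forall>n\<in>{1..N}. riesz_basis_exp (A_ge N S n) (Lam n)"
  shows "riesz_basis_exp S (\<Union>j\<in>{1..N}. (\<lambda>x. x + real j) ` Lam j)"
proof -
  interpret ctx N S Lam using assms(1-4) by unfold_locales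
  have Lamb_eq: "(\<Union>j\<in>{1..N}. (\<lambda>x. x + real j) ` Lam j) = Lamb" by (simp add: Lamb_def lay_def)
  have C: "\<forall>n\<in>{1..N}. \<forall>f. in_L2 (A_ge N S n) f \<longrightarrow> (\<forall>\<epsilon>>0. \<exists>F a. finite F \<and> F \<subseteq> Lam n \<and>
          L2_norm_sq (A_ge N S n) (\<lambda>t. f t - (\<Sum>lam\<in>F. a lam * expo lam t)) < \<epsilon>)"
  proof (intro ballI)
    fix n assume n: "n \<in> {1..N}"
    have "riesz_basis_exp (A_ge N S n) (Lam n)" using assms(5) n by blast
    then show "\<forall>f. in_L2 (A_ge N S n) f \<longrightarrow> (\<forall>\<epsilon>>0. \<exists>F a. finite F \<and> F \<subseteq> Lam n \<and>
          L2_norm_sq (A_ge N S n) (\<lambda>t. f t - (\<Sum>lam\<in>F. a lam * expo lam t)) < \<epsilon>)"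
      unfolding riesz_basis_exp_def by (rule conjunct1)
  qed
  have R: "\<forall>n\<in>{1..N}. \<exists>c>0. \<forall>F' a'. finite F' \<longrightarrow> F' \<subseteq> Lam n \<longrightarrow>
        c * (\<Sum>l\<in>F'. (cmod (a' l))\<^sup>2) \<le> L2_norm_sq (A_ge N S n) (\<lambda>t. \<Sum>l\<in>F'. a' l * expo l t)"
  proof
    fix n assume n: "n \<in> {1..N}"
    have "riesz_basis_exp (A_ge N S n) (Lam n)" using assms(5) n by blast
    then have "\<exists>c C. 0 < c \<and> c \<le> C \<and>
        (\<forall>F a. finite F \<longrightarrow> F \<subseteq> Lam n \<longrightarrow>
           c * (\<Sum>lam\<in>F. (cmod (a lam))\<^sup>2) \<le> L2_norm_sq (A_ge N S n) (\<lambda>t. \<Sum>lam\<in>F. a lam * expo lam t)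
         \<and> L2_norm_sq (A_ge N S n) (\<lambda>t. \<Sum>lam\<in>F. a lam * expo lam t) \<le> C * (\<Sum>lam\<in>F. (cmod (a lam))\<^sup>2))"
      unfolding riesz_basis_exp_def by (rule conjunct2)
    then obtain c C where "0 < c" "\<forall>F a. finite F \<longrightarrow> F \<subseteq> Lam n \<longrightarrow>
           c * (\<Sum>lam\<in>F. (cmod (a lam))\<^sup>2) \<le> L2_norm_sq (A_ge N S n) (\<lambda>t. \<Sum>lam\<in>F. a lam * expo lam t)
         \<and> L2_norm_sq (A_ge N S n) (\<lambda>t. \<Sum>lam\<in>F. a lam * expo lam t) \<le> C * (\<Sum>lam\<in>F. (cmod (a lam))\<^sup>2)"
      by blast
    then show "\<exists>c>0. \<forall>F' a'. finite F' \<longrightarrow> F' \<subseteq> Lam n \<longrightarrow>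
        c * (\<Sum>l\<in>F'. (cmod (a' l))\<^sup>2) \<le> L2_norm_sq (A_ge N S n) (\<lambda>t. \<Sum>l\<in>F'. a' l * expo l t)"
      by blast
  qed
  obtain D where D: "D > 0" "\<forall>F a. finite F \<longrightarrow> F \<subseteq> Lamb \<longrightarrow>
     (\<Sum>l\<in>F. (cmod (a l))\<^sup>2) \<le> D * L2_norm_sq S (\<lambda>t. \<Sum>l\<in>F. a l * expo l t)"
    using lower[OF R] by blast
  show ?thesis
    unfolding riesz_basis_exp_def Lamb_eq
  proof (rule conjI)
    show "\<forall>f. in_L2 S f \<longrightarrow> (\<forall>\<epsilon>>0. \<exists>F a. finite F \<and> F \<subseteq> Lamb \<and> L2_norm_sq S (\<lambda>t. f t - (\<Sum>lam\<in>F. a lam * expo lam t)) < \<epsilon>)"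
      using complete[OF C] by blast
  next
  show "\<exists>c C. 0 < c \<and> c \<le> C \<and>
        (\<forall>F a. finite F \<longrightarrow> F \<subseteq> Lamb \<longrightarrow>
           c * (\<Sum>lam\<in>F. (cmod (a lam))\<^sup>2) \<le> L2_norm_sq S (\<lambda>t. \<Sum>lam\<in>F. a lam * expo lam t)
         \<and> L2_norm_sq S (\<lambda>t. \<Sum>lam\<in>F. a lam * expo lam t) \<le> C * (\<Sum>lam\<in>F. (cmod (a lam))\<^sup>2))"
  proof (rule exI[of _ "min 1 (1 / D)"], rule exI[of _ 1], intro conjI allI impI)
    show "0 < min 1 (1 / D)" using D by simp
    show "min 1 (1 / D) \<le> 1" by simp
  next
    fix F and a :: "real \<Rightarrow> complex"
    assume F: "finite F" "F \<subseteq> Lamb"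
    have s0: "0 \<le> (\<Sum>l\<in>F. (cmod (a l))\<^sup>2)" by (intro sum_nonneg) auto
    have "min 1 (1 / D) * (\<Sum>l\<in>F. (cmod (a l))\<^sup>2) \<le> (1 / D) * (\<Sum>l\<in>F. (cmod (a l))\<^sup>2)"
      using s0 by (intro mult_right_mono) auto
    also have "\<dots> \<le> (1 / D) * (D * L2_norm_sq S (\<lambda>t. \<Sum>l\<in>F. a l * expo l t))"
      using D F by (intro mult_left_mono) auto
    also have "\<dots> = L2_norm_sq S (\<lambda>t. \<Sum>l\<in>F. a l * expo l t)" using D by simp
    finally show "min 1 (1 / D) * (\<Sum>l\<in>F. (cmod (a l))\<^sup>2) \<le> L2_norm_sq S (\<lambda>t. \<Sum>l\<in>F. a l * expo l t)" .
    show "L2_norm_sq S (\<lambda>t. \<Sum>l\<in>F. a l * expo l t) \<le> 1 * (\<Sum>l\<in>F. (cmod (a l))\<^sup>2)"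
      using upper[OF F] .
  qed
  qed
qed


end
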